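(* Let $m \ge r \ge 2$ be integers and let $F$ be an $(r-1)$-graph on $m-1$ vertices with $\pi(F) < 1/m$. Then there is $n_0$ such that for every $n\ge n_0$, $$\mathrm{EX}\left(n,(t+1)\widehat{F}\right) = K_t^r \mathbin{\bowtie} \mathrm{EX}(n-t,\widehat{F})$$ holds for all integers $t$ satisfying $$0 \le t \le \min\left\{\frac{1-m\cdot\pi(F)}{5m^2}\cdot\frac{\mathrm{ex}(n,\widehat{F})}{\binom{n-1}{r-1}},\ \frac{1-m\cdot \pi(F)}{40m^2}\cdot\frac{n-1}{r-1}\right\}.$$
   Context: A $k$-graph is a set of $k$-element subsets (edges) of a finite vertex set. For a $k$-graph $F$, $\mathrm{ex}(n,F)$ is the maximum number of edges of an $n$-vertex $k$-graph containing no copy of $F$, $\mathrm{EX}(n,F)$ is the set of such $n$-vertex $k$-graphs with exactly $\mathrm{ex}(n,F)$ edges, and $\pi(F) := \lim_{n\to\infty}\mathrm{ex}(n,F)/\binom{n}{k}$ is the Turán density. The suspension of an $(r-1)$-graph $F$ is the $r$-graph $\widehat{F} := \{\{v\}\cup e : e\in F\}$, where $v$ is a new vertex not in $V(F)$. For $t\ge 0$, $\mathrm{EX}(n,(t+1)\widehat F)$ is the set of $n$-vertex $r$-graphs that do not contain $t+1$ pairwise vertex-disjoint copies of $\widehat F$ and have the maximum number of edges among such $r$-graphs. $K_t^r$ is the complete $r$-graph on $t$ vertices; the join $\mathcal{G}\mathbin{\bowtie}\mathcal{H}$ of $r$-graphs on disjoint vertex sets is their disjoint union together with all $r$-sets meeting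 both vertex sets; $\mathcal{H}\mathbin{\bowtie}\mathcal{F}:=\{\mathcal{H}\mathbin{\bowtie}\mathcal{G}:\mathcal{G}\in\mathcal{F}\}$ (equality up to isomorphism). *)

theory Defs
  imports Complex_Main
begin

definition kgraph_on :: "nat \<Rightarrow> nat set \<Rightarrow> nat set set \<Rightarrow> bool" where
  "kgraph_on k V H \<longleftrightarrow> (\<forall>e\<in>H. e \<subseteq> V \<and> card e = k)"

definition embeds :: "nat set \<Rightarrow> nat set set \<Rightarrow> nat set \<Rightarrow> nat set set \<Rightarrow> (nat \<Rightarrow> nat) \<Rightarrow> bool" where
  "embeds VF F V H \<phi> \<longleftrightarrow> inj_on \<phi> VF \<and> \<phi> ` VF \<subseteq> V \<and> (\<forall>e\<in>F. \<phi> ` e \<in> H)"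

definition has_disj_copies :: "nat \<Rightarrow> nat \<Rightarrow> nat set \<Rightarrow> nat set set \<Rightarrow> nat set set \<Rightarrow> bool" where
  "has_disj_copies s n VF F H \<longleftrightarrow>
     (\<exists>\<phi> :: nat \<Rightarrow> nat \<Rightarrow> nat.
        (\<forall>i<s. embeds VF F {0..<n} H (\<phi> i)) \<and>
        (\<forall>i<s. \<forall>j<s. i \<noteq> j \<longrightarrow> \<phi> i ` VF \<inter> \<phi> j ` VF = {}))"

definition exs :: "nat \<Rightarrow> nat \<Rightarrow> nat set \<Rightarrow> nat set set \<Rightarrow> nat \<Rightarrow> nat" where
  "exs n k VF F s = Max {card H | H. kgraph_on k {0..<n} H \<and> \<not> has_disj_copies s n VF F H}"

definition EXs :: "nat \<Rightarrow> nat \<Rightarrow> nat set \<Rightarrow> nat set set \<Rightarrow> nat \<Rightarrow> nat set set set" where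
  "EXs n k VF F s = {H. kgraph_on k {0..<n} H \<and> \<not> has_disj_copies s n VF F H \<and>
                        card H = exs n k VF F s}"

definition turan_density :: "nat \<Rightarrow> nat set \<Rightarrow> nat set set \<Rightarrow> real" where
  "turan_density k VF F = lim (\<lambda>n. real (exs n k VF F 1) / real (n choose k))"

text \<open>Suspension of an (r-1)-graph F on vertex set {0..<m-1}: new vertex m-1.\<close>
definition suspension :: "nat \<Rightarrow> nat set set \<Rightarrow> nat set set" where
  "suspension m F = (\<lambda>e. insert (m - 1) e) ` F"

text \<open>K_t^r join G, where G lives on {0..<n-t} and K_t^r on {n-t..<n}: G together with all
  r-subsets of {0..<n} meeting {n-t..<n}.\<close>
definition join_clique :: "nat \<Rightarrow> nat \<Rightarrow> nat \<Rightarrow> nat set set \<Rightarrow> nat set set" where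
  "join_clique r n t G = G \<union> {e. e \<subseteq> {0..<n} \<and> card e = r \<and> e \<inter> {n - t..<n} \<noteq> {}}"

end

theory Submission
  imports Defs
begin


definition hasd :: "nat \<Rightarrow> nat set \<Rightarrow> nat set set \<Rightarrow> nat set \<Rightarrow> nat set set \<Rightarrow> bool" where
  "hasd s VF F V H \<longleftrightarrow> (\<exists>\<phi> :: nat \<Rightarrow> nat \<Rightarrow> nat.
        (\<forall>i<s. embeds VF F V H (\<phi> i)) \<and>
        (\<forall>i<s. \<forall>j<s. i \<noteq> j \<longrightarrow> \<phi> i ` VF \<inter> \<phi> j ` VF = {}))"

lemma has_disj_copies_hasd: "has_disj_copies s n VF F H = hasd s VF F {0..<n} H"
  unfolding has_disj_copies_def hasd_def by simp

lemma hasd_one: "hasd (Suc 0) VF F V H \<longleftrightarrow> (\<exists>\<psi>. embeds VF F V H \<psi>)"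
  unfolding hasd_def
  apply (rule iffI)
   apply (elim exE conjE)
   apply (rule exI)
   apply (erule allE[of _ 0])
   apply simp
  apply (elim exE)
  apply (rule_tac x="\<lambda>_. \<psi>" in exI)
  apply simp
  done

definition frees :: "nat \<Rightarrow> nat set \<Rightarrow> nat set set \<Rightarrow> nat \<Rightarrow> nat set \<Rightarrow> nat set set set" where
  "frees k VF F s V = {H. kgraph_on k V H \<and> \<not> hasd s VF F V H}"

definition exV :: "nat \<Rightarrow> nat set \<Rightarrow> nat set set \<Rightarrow> nat \<Rightarrow> nat set \<Rightarrow> nat" where
  "exV k VF F s V = Max (card ` frees k VF F s V)"

lemma exs_exV: "exs n k VF F s = exV k VF F s {0..<n}"
  unfolding exs_def exV_def frees_def has_disj_copies_hasd
  by (simp add: setcompr_eq_image)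

lemma kgraph_Pow: "kgraph_on k V H \<Longrightarrow> H \<subseteq> Pow V"
  unfolding kgraph_on_def by auto

lemma finite_frees: "finite V \<Longrightarrow> finite (frees k VF F s V)"
  unfolding frees_def
  by (rule finite_subset[of _ "Pow (Pow V)"]) (auto dest: kgraph_Pow)

lemma free_le: "finite V \<Longrightarrow> kgraph_on k V H \<Longrightarrow> \<not> hasd s VF F V H \<Longrightarrow> card H \<le> exV k VF F s V"
  unfolding exV_def by (rule Max_ge) (use finite_frees[of V k VF F s] in \<open>auto simp: frees_def\<close>)

lemma ex_attained: "finite V \<Longrightarrow> kgraph_on k V H0 \<Longrightarrow> \<not> hasd s VF F V H0 \<Longrightarrow>
   \<exists>H. kgraph_on k V H \<and> \<not> hasd s VF F V H \<and> card H = exV k VF F s V"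
proof -
  assume a: "finite V" "kgraph_on k V H0" "\<not> hasd s VF F V H0"
  have "exV k VF F s V \<in> card ` frees k VF F s V"
    unfolding exV_def using a finite_frees[of V k VF F s] by (intro Max_in) (auto simp: frees_def)
  then show ?thesis by (auto simp: frees_def)
qed

lemma embeds_mono: "embeds VF F V H \<phi> \<Longrightarrow> V \<subseteq> V' \<Longrightarrow> H \<subseteq> H' \<Longrightarrow> embeds VF F V' H' \<phi>"
  unfolding embeds_def by auto

lemma hasd_mono: "hasd s VF F V H \<Longrightarrow> V \<subseteq> V' \<Longrightarrow> H \<subseteq> H' \<Longrightarrow> hasd s VF F V' H'"
  unfolding hasd_def
  apply (elim exE conjE)
  apply (rule_tac x=\<phi> in exI)
  apply (intro conjI)
   apply (intro allI impI)
   apply (rule embeds_mono; simp)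
  apply assumption
  done

lemma hasd_mono_s: "hasd s VF F V H \<Longrightarrow> s' \<le> s \<Longrightarrow> hasd s' VF F V H"
  unfolding hasd_def
  apply (elim exE conjE)
  apply (rule_tac x=\<phi> in exI)
  apply simp
  done

lemma hasd_zero: "hasd 0 VF F V H"
  unfolding hasd_def by simp

definition imH :: "(nat \<Rightarrow> nat) \<Rightarrow> nat set set \<Rightarrow> nat set set" where
  "imH \<sigma> H = (\<lambda>e. \<sigma> ` e) ` H"

lemma embeds_image:
  assumes "inj_on \<sigma> V" "embeds VF F V H \<phi>"
  shows "embeds VF F (\<sigma> ` V) (imH \<sigma> H) (\<sigma> \<circ> \<phi>)"
proof -
  have a: "inj_on \<phi> VF" "\<phi> ` VF \<subseteq> V" "\<forall>e\<in>F. \<phi> ` e \<in> H" using assms(2) unfolding embeds_def by auto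
  have "inj_on (\<sigma> \<circ> \<phi>) VF" by (rule comp_inj_on[OF a(1) inj_on_subset[OF assms(1) a(2)]])
  moreover have "(\<sigma> \<circ> \<phi>) ` VF \<subseteq> \<sigma> ` V" using a(2) by (metis image_comp image_mono)
  moreover have "\<forall>e\<in>F. (\<sigma> \<circ> \<phi>) ` e \<in> imH \<sigma> H"
  proof
    fix e assume "e \<in> F"
    then have "\<phi> ` e \<in> H" using a(3) by blast
    then have "\<sigma> ` (\<phi> ` e) \<in> imH \<sigma> H" unfolding imH_def by (rule imageI)
    then show "(\<sigma> \<circ> \<phi>) ` e \<in> imH \<sigma> H" by (simp add: image_comp)
  qed
  ultimately show ?thesis unfolding embeds_def by blast
qed

lemma hasd_image:
  assumes "inj_on \<sigma> V" "hasd s VF F V H"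
  shows "hasd s VF F (\<sigma> ` V) (imH \<sigma> H)"
proof -
  obtain \<phi> where e: "\<forall>i<s. embeds VF F V H (\<phi> i)"
    and d: "\<forall>i<s. \<forall>j<s. i \<noteq> j \<longrightarrow> \<phi> i ` VF \<inter> \<phi> j ` VF = {}"
    using assms(2) unfolding hasd_def by blast
  have "\<forall>i<s. embeds VF F (\<sigma> ` V) (imH \<sigma> H) (\<sigma> \<circ> \<phi> i)"
    using e embeds_image[OF assms(1)] by blast
  moreover have "\<forall>i<s. \<forall>j<s. i \<noteq> j \<longrightarrow> (\<sigma> \<circ> \<phi> i) ` VF \<inter> (\<sigma> \<circ> \<phi> j) ` VF = {}"
  proof (intro allI impI)
    fix i j assume ij: "i < s" "j < s" "i \<noteq> j"
    have "\<phi> i ` VF \<subseteq> V" "\<phi> j ` VF \<subseteq> V" using e ij unfolding embeds_def by auto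
    then have "\<sigma> ` (\<phi> i ` VF) \<inter> \<sigma> ` (\<phi> j ` VF) = \<sigma> ` (\<phi> i ` VF \<inter> \<phi> j ` VF)"
      using assms(1) by (simp add: inj_on_image_Int)
    then show "(\<sigma> \<circ> \<phi> i) ` VF \<inter> (\<sigma> \<circ> \<phi> j) ` VF = {}" using d ij by (simp add: image_comp)
  qed
  ultimately have "(\<forall>i<s. embeds VF F (\<sigma> ` V) (imH \<sigma> H) ((\<lambda>i. \<sigma> \<circ> \<phi> i) i)) \<and>
     (\<forall>i<s. \<forall>j<s. i \<noteq> j \<longrightarrow> (\<lambda>i. \<sigma> \<circ> \<phi> i) i ` VF \<inter> (\<lambda>i. \<sigma> \<circ> \<phi> i) j ` VF = {})"
    by (rule conjI)
  then show ?thesis unfolding hasd_def by (rule exI[of _ "\<lambda>i. \<sigma> \<circ> \<phi> i"])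
qed

lemma kgraph_image:
  assumes "inj_on \<sigma> V" "kgraph_on k V H"
  shows "kgraph_on k (\<sigma> ` V) (imH \<sigma> H)"
  using assms unfolding kgraph_on_def imH_def
  by (auto simp: card_image inj_on_subset)

lemma card_imH:
  assumes "inj_on \<sigma> V" "kgraph_on k V H"
  shows "card (imH \<sigma> H) = card H"
proof -
  have "inj_on (\<lambda>e. \<sigma> ` e) H"
  proof (rule inj_onI)
    fix x y assume "x \<in> H" "y \<in> H" "\<sigma> ` x = \<sigma> ` y"
    then show "x = y" using inj_on_image_eq_iff[OF assms(1)] kgraph_Pow[OF assms(2)] by blast
  qed
  then show ?thesis unfolding imH_def by (simp add: card_image)
qed

lemma imH_inv:
  assumes "inj_on \<sigma> V" "kgraph_on k V H"
  shows "imH (inv_into V \<sigma>) (imH \<sigma> H) = H"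
proof -
  have "imH (inv_into V \<sigma>) (imH \<sigma> H) = (\<lambda>e. inv_into V \<sigma> ` \<sigma> ` e) ` H"
    unfolding imH_def by (simp add: image_image)
  also have "\<dots> = (\<lambda>e. e) ` H"
    using assms unfolding kgraph_on_def by (intro image_cong) auto
  finally show ?thesis by simp
qed

lemma hasd_image_iff:
  assumes "inj_on \<sigma> V" "kgraph_on k V H"
  shows "hasd s VF F (\<sigma> ` V) (imH \<sigma> H) \<longleftrightarrow> hasd s VF F V H"
proof
  assume "hasd s VF F (\<sigma> ` V) (imH \<sigma> H)"
  from hasd_image[OF inj_on_inv_into[of "\<sigma> ` V" \<sigma> V] this]
  show "hasd s VF F V H" using imH_inv[OF assms] assms(1) by simp
qed (rule hasd_image[OF assms(1)])

lemma in_card_frees: "kgraph_on k V H \<Longrightarrow> \<not> hasd s VF F V H \<Longrightarrow> card H \<in> card ` frees k VF F s V"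
  unfolding frees_def by simp

lemma exV_image:
  assumes "inj_on \<sigma> V"
  shows "exV k VF F s (\<sigma> ` V) = exV k VF F s V"
proof -
  have "card ` frees k VF F s (\<sigma> ` V) = card ` frees k VF F s V"
  proof (intro equalityI subsetI)
    fix x assume "x \<in> card ` frees k VF F s (\<sigma> ` V)"
    then obtain H where Hin: "H \<in> frees k VF F s (\<sigma> ` V)" and xH: "x = card H" by (rule imageE)
    then have H: "kgraph_on k (\<sigma> ` V) H" "\<not> hasd s VF F (\<sigma> ` V) H" "x = card H" unfolding frees_def by simp_all
    let ?\<tau> = "inv_into V \<sigma>"
    have inj: "inj_on ?\<tau> (\<sigma> ` V)" by (rule inj_on_inv_into) simp
    have tV: "?\<tau> ` \<sigma> ` V = V" using assms by simp
    have "kgraph_on k V (imH ?\<tau> H)" using kgraph_image[OF inj H(1)] tV by simp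
    moreover have "\<not> hasd s VF F V (imH ?\<tau> H)" using hasd_image_iff[OF inj H(1)] H(2) tV by simp
    moreover have "card (imH ?\<tau> H) = x" using card_imH[OF inj H(1)] H(3) by simp
    ultimately show "x \<in> card ` frees k VF F s V" using in_card_frees by metis
  next
    fix x assume "x \<in> card ` frees k VF F s V"
    then obtain H where Hin: "H \<in> frees k VF F s V" and xH: "x = card H" by (rule imageE)
    then have H: "kgraph_on k V H" "\<not> hasd s VF F V H" "x = card H" unfolding frees_def by simp_all
    have "kgraph_on k (\<sigma> ` V) (imH \<sigma> H)" using kgraph_image[OF assms H(1)] .
    moreover have "\<not> hasd s VF F (\<sigma> ` V) (imH \<sigma> H)" using hasd_image_iff[OF assms H(1)] H(2) by simp
    moreover have "card (imH \<sigma> H) = x" using card_imH[OF assms H(1)] H(3) by simp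
    ultimately show "x \<in> card ` frees k VF F s (\<sigma> ` V)" using in_card_frees by metis
  qed
  then show ?thesis unfolding exV_def by simp
qed

lemma exV_card:
  assumes "finite V"
  shows "exV k VF F s V = exs (card V) k VF F s"
proof -
  obtain h where h: "bij_betw h V {0..<card V}" using ex_bij_betw_finite_nat[OF assms] by blast
  then have "exV k VF F s (h ` V) = exV k VF F s V" by (intro exV_image) (simp add: bij_betw_def)
  then show ?thesis using h by (simp add: bij_betw_def exs_exV)
qed


lemma hasd_1: "hasd 1 VF F V H \<longleftrightarrow> (\<exists>\<psi>. embeds VF F V H \<psi>)"
  using hasd_one by simp

lemma empty_free:
  assumes "F \<noteq> {}"
  shows "\<not> hasd (Suc 0) VF F V {}"
  using assms unfolding hasd_one embeds_def by auto

lemma sum_swap_count: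
  assumes "finite V" "finite H"
  shows "(\<Sum>v\<in>V. card {e\<in>H. v \<notin> e}) = (\<Sum>e\<in>H. card (V - e))"
proof -
  have "(\<Sum>v\<in>V. card {e\<in>H. v \<notin> e}) = (\<Sum>v\<in>V. \<Sum>e\<in>H. if v \<notin> e then 1 else 0)"
    using assms by (simp add: sum.inter_filter[symmetric])
  also have "\<dots> = (\<Sum>e\<in>H. \<Sum>v\<in>V. if v \<notin> e then 1 else 0)" by (rule sum.swap)
  also have "\<dots> = (\<Sum>e\<in>H. card (V - e))"
    using assms by (simp add: sum.inter_filter[symmetric] set_diff_eq)
  finally show ?thesis .
qed

lemma dec_step_nonempty:
  assumes F: "F \<noteq> {}" and kn: "k \<le> n"
  shows "real (exs (Suc n) k VF F 1) / real (Suc n choose k) \<le> real (exs n k VF F 1) / real (n choose k)"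
proof -
  let ?V = "{0..<Suc n}"
  have fin: "finite ?V" by simp
  have k0: "kgraph_on k ?V {}" unfolding kgraph_on_def by simp
  obtain H where H: "kgraph_on k ?V H" "\<not> hasd 1 VF F ?V H" "card H = exV k VF F 1 ?V"
    using ex_attained[OF fin k0] empty_free[OF F] by fastforce
  have finH: "finite H" using H(1) kgraph_Pow[OF H(1)] by (meson finite_Pow_iff finite_subset fin)
  have le: "card {e\<in>H. v \<notin> e} \<le> exs n k VF F 1" if v: "v \<in> ?V" for v
  proof -
    have kg: "kgraph_on k (?V - {v}) {e\<in>H. v \<notin> e}" using H(1) unfolding kgraph_on_def by auto
    have "\<not> hasd 1 VF F (?V - {v}) {e\<in>H. v \<notin> e}"
    proof
      assume "hasd 1 VF F (?V - {v}) {e\<in>H. v \<notin> e}"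
      then have "hasd 1 VF F ?V H" by (rule hasd_mono) auto
      then show False using H(2) by simp
    qed
    then have "card {e\<in>H. v \<notin> e} \<le> exV k VF F 1 (?V - {v})" using free_le[OF _ kg] by simp
    also have "\<dots> = exs n k VF F 1" using exV_card[of "?V - {v}"] v by simp
    finally show ?thesis .
  qed
  have "(\<Sum>v\<in>?V. card {e\<in>H. v \<notin> e}) = (\<Sum>e\<in>H. card (?V - e))" by (rule sum_swap_count[OF fin finH])
  also have "\<dots> = (\<Sum>e\<in>H. Suc n - k)"
  proof (rule sum.cong)
    fix e assume "e \<in> H"
    then have "e \<subseteq> ?V" "card e = k" using H(1) unfolding kgraph_on_def by auto
    then show "card (?V - e) = Suc n - k" by (simp add: card_Diff_subset finite_subset)
  qed simp
  also have "\<dots> = card H * (Suc n - k)" by simp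
  finally have eq: "(\<Sum>v\<in>?V. card {e\<in>H. v \<notin> e}) = card H * (Suc n - k)" .
  have "(\<Sum>v\<in>?V. card {e\<in>H. v \<notin> e}) \<le> (\<Sum>v\<in>?V. exs n k VF F 1)" by (rule sum_mono) (rule le)
  then have A: "card H * (Suc n - k) \<le> Suc n * exs n k VF F 1" using eq by simp
  have B: "(Suc n - k) * (Suc n choose k) = Suc n * (n choose k)"
    using binomial_absorb_comp[of "Suc n" k] by simp
  have "card H * (n choose k) * Suc n = card H * (Suc n - k) * (Suc n choose k)"
    using B by (metis mult.assoc mult.commute)
  also have "\<dots> \<le> Suc n * exs n k VF F 1 * (Suc n choose k)" using A by (rule mult_right_mono) simp
  finally have X: "card H * (n choose k) * Suc n \<le> Suc n * exs n k VF F 1 * (Suc n choose k)" .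
  have "card H * (n choose k) * Suc n \<le> (exs n k VF F 1 * (Suc n choose k)) * Suc n"
    using X by (metis mult.commute mult.assoc)
  then have "card H * (n choose k) \<le> exs n k VF F 1 * (Suc n choose k)"
    by (rule mult_right_le_imp_le) simp
  then have C: "real (card H) * real (n choose k) \<le> real (exs n k VF F 1) * real (Suc n choose k)"
    by (metis of_nat_le_iff of_nat_mult)
  have p1: "real (n choose k) > 0" "real (Suc n choose k) > 0" using kn by auto
  have "exs (Suc n) k VF F 1 = card H" using H(3) exs_exV by simp
  then show ?thesis using C p1 by (simp add: divide_simps)
qed

lemma all_have_copy_empty:
  assumes "m' \<le> n"
  shows "hasd 1 {0..<m'} {} {0..<n} H"
  unfolding hasd_1 embeds_def using assms by (intro exI[of _ id]) auto

lemma dec_step_empty: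
  assumes kn: "k \<le> n" and mn: "m' \<le> n"
  shows "real (exs (Suc n) k {0..<m'} {} 1) / real (Suc n choose k) \<le> real (exs n k {0..<m'} {} 1) / real (n choose k)"
proof -
  have "frees k {0..<m'} {} 1 {0..<n} = {}" "frees k {0..<m'} {} 1 {0..<Suc n} = {}"
    unfolding frees_def using all_have_copy_empty mn by auto
  then have e: "exs (Suc n) k {0..<m'} {} 1 = exs n k {0..<m'} {} 1" by (simp add: exs_exV exV_def)
  have "real (n choose k) \<le> real (Suc n choose k)" by (simp add: binomial_right_mono)
  moreover have "real (n choose k) > 0" using kn by simp
  ultimately show ?thesis unfolding e by (intro divide_left_mono) auto
qed

lemma conv_aux:
  fixes a :: "nat \<Rightarrow> real"
  assumes dec: "\<And>n. n \<ge> N0 \<Longrightarrow> a (Suc n) \<le> a n" and nn: "\<And>n. a n \<ge> 0"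
  shows "a \<longlonglongrightarrow> lim a" "lim a \<ge> 0"
proof -
  let ?b = "\<lambda>i. a (i + N0)"
  have "decseq ?b" by (rule decseq_SucI) (simp add: dec)
  then obtain L where L: "?b \<longlonglongrightarrow> L" using decseq_convergent[of ?b 0] nn by blast
  then have aL: "a \<longlonglongrightarrow> L" by (rule LIMSEQ_offset)
  then have "lim a = L" by (rule limI)
  then show "a \<longlonglongrightarrow> lim a" using aL by simp
  show "lim a \<ge> 0" using \<open>lim a = L\<close> aL by (metis LIMSEQ_le_const nn)
qed

locale Fset =
  fixes k m' :: nat and F :: "nat set set"
  assumes k1: "1 \<le> k" and kg: "kgraph_on k {0..<m'} F"
begin

definition aseq :: "nat \<Rightarrow> real" where
  "aseq n = real (exs n k {0..<m'} F 1) / real (n choose k)"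

lemma aseq_dec: "n \<ge> max k m' \<Longrightarrow> aseq (Suc n) \<le> aseq n"
proof (cases "F = {}")
  case True
  assume "n \<ge> max k m'"
  then show ?thesis unfolding aseq_def using dec_step_empty[of k n m'] True by simp
next
  case False
  assume "n \<ge> max k m'"
  then show ?thesis unfolding aseq_def using dec_step_nonempty[OF False, of k n] by simp
qed

lemma aseq_conv: "aseq \<longlonglongrightarrow> turan_density k {0..<m'} F" "turan_density k {0..<m'} F \<ge> 0"
proof -
  have "aseq \<longlonglongrightarrow> lim aseq" "lim aseq \<ge> 0"
    using conv_aux[of "max k m'" aseq] aseq_dec by (auto simp: aseq_def)
  moreover have "turan_density k {0..<m'} F = lim aseq"
    unfolding turan_density_def aseq_def by (simp add: fun_eq_iff)
  ultimately show "aseq \<longlonglongrightarrow> turan_density k {0..<m'} F" "turan_density k {0..<m'} F \<ge> 0" by auto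
qed

lemma turan_eps:
  assumes "\<epsilon> > 0" "F \<noteq> {}"
  shows "\<exists>N1. \<forall>V L. finite V \<longrightarrow> card V \<ge> N1 \<longrightarrow> kgraph_on k V L \<longrightarrow> \<not> hasd 1 {0..<m'} F V L
            \<longrightarrow> real (card L) < (turan_density k {0..<m'} F + \<epsilon>) * real (card V choose k)"
proof -
  let ?p = "turan_density k {0..<m'} F"
  have "eventually (\<lambda>n. aseq n < ?p + \<epsilon>) sequentially"
    using order_tendstoD(2)[OF aseq_conv(1)] assms(1) by simp
  then obtain N where N: "\<And>n. n \<ge> N \<Longrightarrow> aseq n < ?p + \<epsilon>" by (auto simp: eventually_sequentially)
  show ?thesis
  proof (intro exI[of _ "max N k"] allI impI)
    fix V L assume V: "finite V" "card V \<ge> max N k" and L: "kgraph_on k V L" "\<not> hasd 1 {0..<m'} F V L"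
    have "card L \<le> exV k {0..<m'} F 1 V" by (rule free_le[OF V(1) L])
    also have "\<dots> = exs (card V) k {0..<m'} F 1" by (rule exV_card[OF V(1)])
    finally have c: "real (card L) \<le> real (exs (card V) k {0..<m'} F 1)" by simp
    have pos: "real (card V choose k) > 0" using V(2) by simp
    have "aseq (card V) < ?p + \<epsilon>" using N V(2) by simp
    then have "real (exs (card V) k {0..<m'} F 1) < (?p + \<epsilon>) * real (card V choose k)"
      unfolding aseq_def using pos by (simp add: divide_less_eq)
    then show "real (card L) < (?p + \<epsilon>) * real (card V choose k)" using c by linarith
  qed
qed

end


definition deg :: "nat set set \<Rightarrow> nat \<Rightarrow> nat" where
  "deg H v = card {e\<in>H. v \<in> e}"

definition link :: "nat set set \<Rightarrow> nat \<Rightarrow> nat set \<Rightarrow> nat set set" where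
  "link H u W = {f. f \<subseteq> W \<and> insert u f \<in> H}"

lemma atLeast0_lessThan_m: "1 \<le> (m::nat) \<Longrightarrow> {0..<m} = insert (m - 1) {0..<m - 1}"
  by (cases m) (auto simp: atLeast0_lessThan_Suc)

lemma link_embed:
  assumes m1: "1 \<le> m" and u: "u \<notin> W" and kgF: "kgraph_on k {0..<m - 1} F"
    and emb: "embeds {0..<m - 1} F W (link H u W) \<psi>"
  shows "embeds {0..<m} (suspension m F) (insert u W) H (\<psi>(m - 1 := u))"
proof -
  let ?p = "\<psi>(m - 1 := u)"
  have e: "inj_on \<psi> {0..<m - 1}" "\<psi> ` {0..<m - 1} \<subseteq> W" "\<forall>e\<in>F. \<psi> ` e \<in> link H u W"
    using emb unfolding embeds_def by auto
  have eqA: "\<And>A. A \<subseteq> {0..<m - 1} \<Longrightarrow> ?p ` A = \<psi> ` A"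
    by (intro image_cong) auto
  have "inj_on ?p {0..<m - 1}" using e(1) inj_on_cong[of "{0..<m - 1}" ?p \<psi>] by auto
  moreover have "?p (m - 1) \<notin> ?p ` ({0..<m - 1} - {m - 1})"
    using eqA[of "{0..<m - 1}"] e(2) u by auto
  ultimately have inj: "inj_on ?p {0..<m}" unfolding atLeast0_lessThan_m[OF m1] by simp
  have img: "?p ` {0..<m} \<subseteq> insert u W"
    unfolding atLeast0_lessThan_m[OF m1] using eqA[of "{0..<m - 1}"] e(2) by auto
  have edges: "\<forall>e\<in>suspension m F. ?p ` e \<in> H"
  proof
    fix e' assume "e' \<in> suspension m F"
    then obtain e where e': "e' = insert (m - 1) e" "e \<in> F" unfolding suspension_def by auto
    have sub: "e \<subseteq> {0..<m - 1}" using kgF e'(2) unfolding kgraph_on_def by auto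
    have "?p ` e' = insert (?p (m - 1)) (?p ` e)" unfolding e'(1) by (rule image_insert)
    also have "\<dots> = insert u (\<psi> ` e)" using eqA[OF sub] by simp
    finally have "?p ` e' = insert u (\<psi> ` e)" .
    moreover have "\<psi> ` e \<in> link H u W" using e(3) e'(2) by blast
    ultimately show "?p ` e' \<in> H" unfolding link_def by simp
  qed
  show ?thesis unfolding embeds_def using inj img edges by blast
qed

lemma card_deg_link:
  assumes "kgraph_on k V H" "finite V" "v \<in> V"
  shows "deg H v = card (link H v (V - {v}))"
proof -
  have "(\<lambda>e. e - {v}) ` {e\<in>H. v \<in> e} = link H v (V - {v})"
  proof (intro equalityI subsetI)
    fix f assume "f \<in> (\<lambda>e. e - {v}) ` {e\<in>H. v \<in> e}"
    then obtain e where "e \<in> H" "v \<in> e" "f = e - {v}" by auto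
    moreover have "e \<subseteq> V" using assms(1) \<open>e \<in> H\<close> unfolding kgraph_on_def by auto
    ultimately show "f \<in> link H v (V - {v})" unfolding link_def by (auto simp: insert_absorb)
  next
    fix f assume "f \<in> link H v (V - {v})"
    then have "insert v f \<in> H" "f \<subseteq> V - {v}" unfolding link_def by auto
    then show "f \<in> (\<lambda>e. e - {v}) ` {e\<in>H. v \<in> e}"
      by (intro image_eqI[of _ _ "insert v f"]) auto
  qed
  moreover have "inj_on (\<lambda>e. e - {v}) {e\<in>H. v \<in> e}"
    by (rule inj_onI) (metis (no_types, lifting) insert_Diff mem_Collect_eq)
  ultimately show ?thesis unfolding deg_def by (metis card_image)
qed

lemma kgraph_link:
  assumes "kgraph_on k V H" "finite V" "v \<notin> W" "W \<subseteq> V"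
  shows "kgraph_on (k - 1) W (link H v W)"
  unfolding kgraph_on_def link_def
proof (intro ballI conjI)
  fix f assume f: "f \<in> {f. f \<subseteq> W \<and> insert v f \<in> H}"
  then have fW: "f \<subseteq> W" by simp
  then show "f \<subseteq> W" .
  have "finite W" using assms(2,4) by (rule finite_subset[rotated])
  then have "finite f" using fW by (rule finite_subset[rotated])
  moreover have "v \<notin> f" using f assms(3) by auto
  moreover have "card (insert v f) = k" using f assms(1) unfolding kgraph_on_def by auto
  ultimately show "card f = k - 1" by simp
qed

lemma H_split:
  "card H \<le> card {e\<in>H. v \<notin> e} + deg H v" if "finite H"
proof -
  have "H = {e\<in>H. v \<notin> e} \<union> {e\<in>H. v \<in> e}" by auto
  then show ?thesis unfolding deg_def by (metis card_Un_le)
qed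

lemma H_split_eq:
  "card H = card {e\<in>H. v \<notin> e} + deg H v" if "finite H"
proof -
  have "H = {e\<in>H. v \<notin> e} \<union> {e\<in>H. v \<in> e}" by auto
  moreover have "{e\<in>H. v \<notin> e} \<inter> {e\<in>H. v \<in> e} = {}" by auto
  ultimately show ?thesis unfolding deg_def using that by (metis card_Un_disjoint finite_Un)
qed

locale Setup =
  fixes m r :: nat and F :: "nat set set"
  assumes r2: "2 \<le> r" and rm: "r \<le> m" and kgF: "kgraph_on (r - 1) {0..<m - 1} F" and Fne: "F \<noteq> {}"
begin

abbreviation "Fh \<equiv> suspension m F"
abbreviation "hasH s V H \<equiv> hasd s {0..<m} Fh V H"
abbreviation "exH V \<equiv> exV r {0..<m} Fh 1 V"
abbreviation "exF V \<equiv> exV (r - 1) {0..<m - 1} F 1 V"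
abbreviation "ex' a \<equiv> exs a r {0..<m} Fh 1"
abbreviation "exF' a \<equiv> exs a (r - 1) {0..<m - 1} F 1"

lemma m1: "1 \<le> m" using r2 rm by simp

lemma Fh_ne: "Fh \<noteq> {}" using Fne unfolding suspension_def by simp

lemma smooth_V:
  assumes V: "finite V" "v \<in> V"
  shows "exH V \<le> exH (V - {v}) + exF (V - {v})"
proof -
  have k0: "kgraph_on r V {}" unfolding kgraph_on_def by simp
  obtain G where G: "kgraph_on r V G" "\<not> hasH 1 V G" "card G = exH V"
    using ex_attained[OF V(1) k0] empty_free[OF Fh_ne] by fastforce
  have finG: "finite G" using kgraph_Pow[OF G(1)] V(1) by (meson finite_Pow_iff finite_subset)
  have kg1: "kgraph_on r (V - {v}) {e\<in>G. v \<notin> e}" using G(1) unfolding kgraph_on_def by auto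
  have "\<not> hasH 1 (V - {v}) {e\<in>G. v \<notin> e}"
  proof
    assume "hasH 1 (V - {v}) {e\<in>G. v \<notin> e}"
    then have "hasH 1 V G" by (rule hasd_mono) auto
    then show False using G(2) by simp
  qed
  then have c1: "card {e\<in>G. v \<notin> e} \<le> exH (V - {v})" using free_le[OF _ kg1] V by simp
  have kg2: "kgraph_on (r - 1) (V - {v}) (link G v (V - {v}))"
    by (rule kgraph_link[OF G(1) V(1)]) auto
  have "\<not> hasd 1 {0..<m - 1} F (V - {v}) (link G v (V - {v}))"
  proof
    assume "hasd 1 {0..<m - 1} F (V - {v}) (link G v (V - {v}))"
    then obtain \<psi> where "embeds {0..<m - 1} F (V - {v}) (link G v (V - {v})) \<psi>" unfolding hasd_1 by blast
    from link_embed[OF m1 _ kgF this] have "embeds {0..<m} Fh (insert v (V - {v})) G (\<psi>(m - 1 := v))" by simp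
    then have "hasH 1 V G" unfolding hasd_1 using V(2) by (metis insert_Diff)
    then show False using G(2) by simp
  qed
  then have c2: "card (link G v (V - {v})) \<le> exF (V - {v})" using free_le[OF _ kg2] V by simp
  have "card G = card {e\<in>G. v \<notin> e} + deg G v" by (rule H_split_eq[OF finG])
  also have "deg G v = card (link G v (V - {v}))" by (rule card_deg_link[OF G(1) V])
  finally show ?thesis using G(3) c1 c2 by simp
qed

lemma smooth: "ex' (Suc a) \<le> ex' a + exF' a"
proof -
  have "exH {0..<Suc a} \<le> exH ({0..<Suc a} - {a}) + exF ({0..<Suc a} - {a})"
    by (rule smooth_V) auto
  moreover have "{0..<Suc a} - {a} = {0..<a}" by auto
  ultimately show ?thesis by (simp add: exs_exV)
qed

lemma mono_step:
  assumes ma: "m \<le> a"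
  shows "ex' a \<le> ex' (Suc a)"
proof -
  have k0: "kgraph_on r {0..<a} {}" unfolding kgraph_on_def by simp
  obtain G where G: "kgraph_on r {0..<a} G" "\<not> hasH 1 {0..<a} G" "card G = exH {0..<a}"
    using ex_attained[OF _ k0] empty_free[OF Fh_ne] by fastforce
  have kg: "kgraph_on r {0..<Suc a} G" using G(1) unfolding kgraph_on_def by (metis (no_types, lifting) atLeastLessThan_iff less_SucI subset_iff)
  have "\<not> hasH 1 {0..<Suc a} G"
  proof
    assume "hasH 1 {0..<Suc a} G"
    then obtain \<phi> where \<phi>: "embeds {0..<m} Fh {0..<Suc a} G \<phi>" unfolding hasd_1 by blast
    have p: "inj_on \<phi> {0..<m}" "\<phi> ` {0..<m} \<subseteq> {0..<Suc a}" "\<forall>e\<in>Fh. \<phi> ` e \<in> G"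
      using \<phi> unfolding embeds_def by auto
    show False
    proof (cases "a \<in> \<phi> ` {0..<m}")
      case False
      have "\<phi> ` {0..<m} \<subseteq> {0..<a}"
      proof
        fix z assume z: "z \<in> \<phi> ` {0..<m}"
        then have "z < Suc a" using p(2) by (meson atLeastLessThan_iff subsetD)
        moreover have "z \<noteq> a" using False z by blast
        ultimately show "z \<in> {0..<a}" by simp
      qed
      then have "embeds {0..<m} Fh {0..<a} G \<phi>" using p unfolding embeds_def by auto
      then show False using G(2) unfolding hasd_1 by blast
    next
      case True
      then obtain j where j: "j < m" "\<phi> j = a" by auto
      have jn: "j \<notin> e" if "e \<in> Fh" for e
      proof
        assume "j \<in> e"
        then have "a \<in> \<phi> ` e" using j by auto
        moreover have "\<phi> ` e \<subseteq> {0..<a}" using p(3) that kgraph_Pow[OF G(1)] by auto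
        ultimately show False by auto
      qed
      have "card (\<phi> ` {0..<m}) = m" using p(1) by (simp add: card_image)
      have "\<phi> ` {0..<m} = insert a (\<phi> ` {0..<m} \<inter> {0..<a})" using p(2) True by auto
      then have "card (\<phi> ` {0..<m} \<inter> {0..<a}) < m"
        using \<open>card (\<phi> ` {0..<m}) = m\<close> by (metis Int_iff atLeastLessThan_iff card_insert_disjoint finite_Int finite_atLeastLessThan less_irrefl lessI)
      then have "\<not> {0..<a} \<subseteq> \<phi> ` {0..<m} \<inter> {0..<a}" using ma
        by (metis card_atLeastLessThan card_mono diff_zero finite_Int finite_atLeastLessThan leD less_le_trans)
      then obtain y where y: "y < a" "y \<notin> \<phi> ` {0..<m}" by (meson IntI atLeastLessThan_iff subsetI zero_le)
      let ?q = "\<phi>(j := y)"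
      have "inj_on ?q {0..<m}" by (rule inj_on_fun_updI[OF p(1) y(2)])
      moreover have "?q ` {0..<m} \<subseteq> {0..<a}"
      proof
        fix z assume "z \<in> ?q ` {0..<m}"
        then obtain i where i: "i < m" "z = ?q i" by auto
        show "z \<in> {0..<a}"
        proof (cases "i = j")
          case True then show ?thesis using i y by simp
        next
          case False
          then have "\<phi> i \<noteq> \<phi> j" using p(1) i j unfolding inj_on_def by auto
          moreover have "\<phi> i < Suc a" using p(2) i(1) by (meson atLeastLessThan_iff image_subset_iff zero_le)
          ultimately show ?thesis using i j False by simp
        qed
      qed
      moreover have "\<forall>e\<in>Fh. ?q ` e \<in> G"
      proof
        fix e assume e: "e \<in> Fh"
        have "?q ` e = \<phi> ` e" using jn[OF e] by (intro image_cong) auto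
        then show "?q ` e \<in> G" using p(3) e by simp
      qed
      ultimately have "embeds {0..<m} Fh {0..<a} G ?q" unfolding embeds_def by blast
      then show False using G(2) unfolding hasd_1 by blast
    qed
  qed
  then have "card G \<le> exH {0..<Suc a}" using free_le[OF _ kg] by simp
  then show ?thesis using G(3) by (simp add: exs_exV)
qed

lemma mono_ex: "m \<le> b \<Longrightarrow> ex' b \<le> ex' (b + j)"
proof (induction j)
  case (Suc j)
  then show ?case using mono_step[of "b + j"] by simp
qed simp

end


lemma hasd_Suc_intro:
  assumes e: "\<forall>i<t. embeds VF F V H (\<phi> i)"
    and d: "\<forall>i<t. \<forall>j<t. i \<noteq> j \<longrightarrow> \<phi> i ` VF \<inter> \<phi> j ` VF = {}"
    and p: "embeds VF F V H \<psi>"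
    and dp: "\<forall>i<t. \<phi> i ` VF \<inter> \<psi> ` VF = {}"
  shows "hasd (Suc t) VF F V H"
proof -
  let ?P = "\<phi>(t := \<psi>)"
  have 1: "\<forall>i<Suc t. embeds VF F V H (?P i)"
  proof (intro allI impI)
    fix i assume "i < Suc t"
    then show "embeds VF F V H (?P i)"
      by (cases "i = t") (simp_all add: p e)
  qed
  have 2: "\<forall>i<Suc t. \<forall>j<Suc t. i \<noteq> j \<longrightarrow> ?P i ` VF \<inter> ?P j ` VF = {}"
  proof (intro allI impI)
    fix i j assume ij: "i < Suc t" "j < Suc t" "i \<noteq> j"
    show "?P i ` VF \<inter> ?P j ` VF = {}"
    proof (cases "i = t")
      case True
      then have "j < t" using ij by simp
      then show ?thesis using True dp by (simp add: Int_commute)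
    next
      case False
      then have it: "i < t" using ij by simp
      show ?thesis
      proof (cases "j = t")
        case True then show ?thesis using it dp False by simp
      next
        case False2: False
        then have "j < t" using ij by simp
        then show ?thesis using it d ij False False2 by simp
      qed
    qed
  qed
  have "(\<forall>i<Suc t. embeds VF F V H (?P i)) \<and> (\<forall>i<Suc t. \<forall>j<Suc t. i \<noteq> j \<longrightarrow> ?P i ` VF \<inter> ?P j ` VF = {})"
    using 1 2 by (rule conjI)
  then show ?thesis unfolding hasd_def by (rule exI[of _ ?P])
qed

lemma exists_max_s:
  assumes "P 0" "\<not> P (Suc t)"
  shows "\<exists>s\<le>t. P s \<and> \<not> P (Suc s)"
  using assms
proof (induction t)
  case 0 then show ?case by auto
next
  case (Suc t)
  show ?case
  proof (cases "P (Suc t)")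
    case True then show ?thesis using Suc.prems by auto
  next
    case False
    then obtain s where "s \<le> t" "P s" "\<not> P (Suc s)" using Suc.IH Suc.prems by blast
    then show ?thesis by (intro exI[of _ s]) auto
  qed
qed

lemma binom_BL1:
  assumes "1 \<le> k" "j \<le> a"
  shows "a choose k \<le> (a - j choose k) + j * (a - 1 choose (k - 1))"
  using assms(2)
proof (induction j)
  case 0 then show ?case by simp
next
  case (Suc j)
  then have IH: "a choose k \<le> (a - j choose k) + j * (a - 1 choose (k - 1))" by simp
  obtain b where b: "a - j = Suc b" using Suc.prems by (metis Suc_diff_le diff_Suc_Suc diff_zero le_imp_less_Suc less_imp_Suc_add Suc_le_lessD zero_less_diff)
  obtain k' where k': "k = Suc k'" using assms(1) by (cases k) auto
  have "a - j choose k = (b choose k) + (b choose k')" using b k' by simp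
  moreover have "b = a - Suc j" using b by simp
  moreover have "b choose k' \<le> a - 1 choose (k - 1)" using b k' by (simp add: binomial_right_mono)
  ultimately show ?case using IH by simp
qed

lemma binom_BL2:
  assumes "1 \<le> r"
  shows "(b choose r) + j * (b choose (r - 1)) \<le> (b + j) choose r"
proof (induction j)
  case 0 then show ?case by simp
next
  case (Suc j)
  obtain r' where r': "r = Suc r'" using assms by (cases r) auto
  have "(b + Suc j) choose r = ((b + j) choose r) + ((b + j) choose r')" using r' by simp
  moreover have "b choose r' \<le> (b + j) choose r'" by (simp add: binomial_right_mono)
  ultimately show ?case using Suc.IH r' by simp
qed

lemma card_sets_containing:
  assumes "finite S" "w \<in> S" "1 \<le> k"
  shows "card {f. f \<subseteq> S \<and> card f = k \<and> w \<in> f} \<le> (card S - 1) choose (k - 1)"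
proof -
  have "{f. f \<subseteq> S \<and> card f = k \<and> w \<in> f} \<subseteq> insert w ` {g. g \<subseteq> S - {w} \<and> card g = k - 1}"
  proof
    fix f assume f: "f \<in> {f. f \<subseteq> S \<and> card f = k \<and> w \<in> f}"
    then have "finite f" using assms(1) finite_subset by blast
    then have "card (f - {w}) = k - 1" using f by simp
    moreover have "f = insert w (f - {w})" using f by auto
    ultimately show "f \<in> insert w ` {g. g \<subseteq> S - {w} \<and> card g = k - 1}" using f by blast
  qed
  then have "card {f. f \<subseteq> S \<and> card f = k \<and> w \<in> f} \<le> card (insert w ` {g. g \<subseteq> S - {w} \<and> card g = k - 1})"
    by (rule card_mono[rotated]) (simp add: assms(1))
  also have "\<dots> \<le> card {g. g \<subseteq> S - {w} \<and> card g = k - 1}" by (rule card_image_le) (simp add: assms(1))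
  also have "\<dots> = (card S - 1) choose (k - 1)" using assms by (simp add: n_subsets)
  finally show ?thesis .
qed

lemma deg_le:
  assumes "kgraph_on r V H" "finite V" "u \<in> V" "1 \<le> r"
  shows "deg H u \<le> (card V - 1) choose (r - 1)"
proof -
  have "link H u (V - {u}) \<subseteq> {f. f \<subseteq> V - {u} \<and> card f = r - 1}"
    using kgraph_link[OF assms(1,2), of u "V - {u}"] unfolding kgraph_on_def by auto
  then have "card (link H u (V - {u})) \<le> card {f. f \<subseteq> V - {u} \<and> card f = r - 1}"
    by (rule card_mono[rotated]) (simp add: assms(2))
  also have "\<dots> = (card V - 1) choose (r - 1)" using assms by (simp add: n_subsets)
  finally show ?thesis using card_deg_link[OF assms(1-3)] by simp
qed


definition Jn :: "nat \<Rightarrow> nat \<Rightarrow> nat \<Rightarrow> nat" where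
  "Jn r n t = (n choose r) - ((n - t) choose r)"

locale Main = Setup +
  fixes p :: real and N1 n1 :: nat
  assumes p0: "0 \<le> p" and pm: "real m * p < 1"
    and tur: "\<And>V L. finite V \<Longrightarrow> card V \<ge> N1 \<Longrightarrow> kgraph_on (r - 1) V L \<Longrightarrow> \<not> hasd 1 {0..<m - 1} F V L
       \<Longrightarrow> real (card L) < (p + (1 - real m * p) / (20 * real m)) * real (card V choose (r - 1))"
    and n1_def: "n1 = 2 * N1 + 2 * m + 2"
begin

definition "\<delta> = 1 - real m * p"
definition "\<theta> = p + \<delta> / (10 * real m)"

lemma mpos: "real m \<ge> 1" using m1 by simp
lemma rpos: "real (r - 1) \<ge> 1" using r2 by simp
lemma \<delta>_pos: "\<delta> > 0" using pm unfolding \<delta>_def by simp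
lemma \<delta>_le1: "\<delta> \<le> 1" using p0 unfolding \<delta>_def by simp
lemma \<theta>_nonneg: "\<theta> \<ge> 0" unfolding \<theta>_def using p0 \<delta>_pos mpos by simp
lemma m\<theta>: "real m * \<theta> = 1 - 9 * \<delta> / 10"
  unfolding \<theta>_def using mpos by (simp add: \<delta>_def field_simps)
lemma eps_le: "p + \<delta> / (20 * real m) \<le> \<theta>"
  unfolding \<theta>_def using \<delta>_pos mpos by (simp add: field_simps)

lemma tur': "finite V \<Longrightarrow> card V \<ge> N1 \<Longrightarrow> kgraph_on (r - 1) V L \<Longrightarrow> \<not> hasd 1 {0..<m - 1} F V L
       \<Longrightarrow> real (card L) < (p + \<delta> / (20 * real m)) * real (card V choose (r - 1))"
  using tur unfolding \<delta>_def by blast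

lemma exF_le:
  assumes "a \<ge> N1"
  shows "real (exF' a) \<le> (p + \<delta> / (20 * real m)) * real (a choose (r - 1))"
proof -
  have k0: "kgraph_on (r - 1) {0..<a} {}" unfolding kgraph_on_def by simp
  obtain L where L: "kgraph_on (r - 1) {0..<a} L" "\<not> hasd 1 {0..<m - 1} F {0..<a} L" "card L = exF {0..<a}"
    using ex_attained[OF _ k0] empty_free[OF Fne] by fastforce
  have "real (card L) < (p + \<delta> / (20 * real m)) * real (card {0..<a} choose (r - 1))"
    by (rule tur'[OF _ _ L(1,2)]) (use assms in auto)
  then show ?thesis using L(3) by (simp add: exs_exV)
qed

lemma smooth_iter:
  assumes "b \<ge> N1" "b + j \<le> n"
  shows "real (ex' (b + j)) \<le> real (ex' b) + real j * ((p + \<delta> / (20 * real m)) * real ((n - 1) choose (r - 1)))"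
  using assms(2)
proof (induction j)
  case 0 then show ?case by simp
next
  case (Suc j)
  have IH: "real (ex' (b + j)) \<le> real (ex' b) + real j * ((p + \<delta> / (20 * real m)) * real ((n - 1) choose (r - 1)))"
    using Suc by simp
  have "ex' (Suc (b + j)) \<le> ex' (b + j) + exF' (b + j)" by (rule smooth)
  moreover have "real (exF' (b + j)) \<le> (p + \<delta> / (20 * real m)) * real ((b + j) choose (r - 1))"
    by (rule exF_le) (use assms in simp)
  moreover have "real ((b + j) choose (r - 1)) \<le> real ((n - 1) choose (r - 1))"
    using Suc.prems by (simp add: binomial_right_mono)
  moreover have "p + \<delta> / (20 * real m) \<ge> 0" using p0 \<delta>_pos mpos by simp
  ultimately have "real (exF' (b + j)) \<le> (p + \<delta> / (20 * real m)) * real ((n - 1) choose (r - 1))"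
    by (meson mult_left_mono order_trans)
  moreover have "real (ex' (Suc (b + j))) \<le> real (ex' (b + j)) + real (exF' (b + j))"
    using \<open>ex' (Suc (b + j)) \<le> ex' (b + j) + exF' (b + j)\<close> by simp
  ultimately have X: "real (ex' (Suc (b + j))) \<le> real (ex' b) + real j * ((p + \<delta> / (20 * real m)) * real ((n - 1) choose (r - 1))) + (p + \<delta> / (20 * real m)) * real ((n - 1) choose (r - 1))"
    using IH by linarith
  have "real (Suc j) * ((p + \<delta> / (20 * real m)) * real ((n - 1) choose (r - 1))) = real j * ((p + \<delta> / (20 * real m)) * real ((n - 1) choose (r - 1))) + (p + \<delta> / (20 * real m)) * real ((n - 1) choose (r - 1))"
    by (simp only: of_nat_Suc ring_distribs mult_1_left add.commute)
  then show ?case using X by simp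
qed

lemma KX:
  assumes n2: "2 \<le> n" and T: "real t * real (r - 1) * 40 * real m ^ 2 \<le> \<delta> * real (n - 1)"
  shows "real (t * ((n - 2) choose (r - 2))) * 40 * real m ^ 2 \<le> \<delta> * real ((n - 1) choose (r - 1))"
proof -
  have id: "(r - 1) * ((n - 1) choose (r - 1)) = (n - 1) * ((n - 2) choose (r - 2))"
    using times_binomial_minus1_eq[of "r - 1" "n - 1"] r2 by (simp add: diff_diff_add numeral_2_eq_2)
  then have idr: "real (r - 1) * real ((n - 1) choose (r - 1)) = real (n - 1) * real ((n - 2) choose (r - 2))"
    by (metis of_nat_mult)
  let ?C = "real ((n - 2) choose (r - 2))"
  have "real t * real (r - 1) * 40 * real m ^ 2 * ?C \<le> \<delta> * real (n - 1) * ?C"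
    using T by (rule mult_right_mono) simp
  also have "\<dots> = \<delta> * real (r - 1) * real ((n - 1) choose (r - 1))" using idr by (simp add: algebra_simps)
  finally have "real (r - 1) * (real t * ?C * 40 * real m ^ 2) \<le> real (r - 1) * (\<delta> * real ((n - 1) choose (r - 1)))"
    by (simp add: algebra_simps)
  then have "real t * ?C * 40 * real m ^ 2 \<le> \<delta> * real ((n - 1) choose (r - 1))"
    using rpos by (simp add: mult_le_cancel_left)
  then show ?thesis by simp
qed

lemma tm_le:
  assumes T: "real t * real (r - 1) * 40 * real m ^ 2 \<le> \<delta> * real (n - 1)"
  shows "40 * (t * m) \<le> n - 1"
proof -
  have "real t * 40 * real m \<le> real t * real (r - 1) * 40 * real m ^ 2"
  proof -
    have one: "1 \<le> real (r - 1) * real m" using rpos mpos mult_mono[of 1 "real (r - 1)" 1 "real m"] by simp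
    have "real t * 40 * real m * 1 \<le> real t * 40 * real m * (real (r - 1) * real m)"
      by (rule mult_left_mono[OF one]) simp
    then show ?thesis by (simp add: power2_eq_square algebra_simps)
  qed
  also have "\<dots> \<le> \<delta> * real (n - 1)" by (rule T)
  also have "\<dots> \<le> real (n - 1)" using \<delta>_le1 mult_right_mono[of \<delta> 1 "real (n - 1)"] by simp
  finally have "real (40 * (t * m)) \<le> real (n - 1)" by (simp add: algebra_simps)
  then show ?thesis by linarith
qed

end


context Main begin

lemma Ext:
  assumes V: "finite V" "u \<in> V" and H: "kgraph_on r V H"
    and n: "card V \<ge> n1 + t"
    and T: "real t * real (r - 1) * 40 * real m ^ 2 \<le> \<delta> * real (card V - 1)"
    and dg: "real (deg H u) \<ge> \<theta> * real ((card V - 1) choose (r - 1))"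
    and has: "hasH t (V - {u}) {e\<in>H. u \<notin> e}"
  shows "hasH (Suc t) V H"
proof -
  let ?n = "card V"
  let ?N = "(?n - 1) choose (r - 1)"
  obtain \<phi> where \<phi>e: "\<forall>i<t. embeds {0..<m} Fh (V - {u}) {e\<in>H. u \<notin> e} (\<phi> i)"
    and \<phi>d: "\<forall>i<t. \<forall>j<t. i \<noteq> j \<longrightarrow> \<phi> i ` {0..<m} \<inter> \<phi> j ` {0..<m} = {}"
    using has unfolding hasd_def by (elim exE conjE) (rule that)
  define W where "W = (\<Union>i\<in>{..<t}. \<phi> i ` {0..<m})"
  have \<phi>W: "\<phi> i ` {0..<m} \<subseteq> W" if "i < t" for i unfolding W_def using that by blast
  have WV: "W \<subseteq> V - {u}"
  proof
    fix x assume "x \<in> W"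
    then obtain i where i: "i < t" "x \<in> \<phi> i ` {0..<m}" unfolding W_def by blast
    have "embeds {0..<m} Fh (V - {u}) {e\<in>H. u \<notin> e} (\<phi> i)" using \<phi>e i(1) by blast
    then show "x \<in> V - {u}" using i(2) unfolding embeds_def by blast
  qed
  have cW: "card W \<le> t * m"
  proof -
    have "card W \<le> (\<Sum>i\<in>{..<t}. card (\<phi> i ` {0..<m}))" unfolding W_def by (rule card_UN_le) simp
    also have "\<dots> \<le> (\<Sum>i\<in>{..<t}. m)"
      by (rule sum_mono) (metis card_atLeastLessThan card_image_le diff_zero finite_atLeastLessThan)
    finally show ?thesis by simp
  qed
  define V' where "V' = V - {u} - W"
  have finV': "finite V'" unfolding V'_def using V(1) by simp
  have uV': "u \<notin> V'" unfolding V'_def by simp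
  have V'V: "V' \<subseteq> V" unfolding V'_def by blast
  have cV': "card V' = ?n - 1 - card W"
    unfolding V'_def using WV V by (simp add: card_Diff_subset finite_subset)
  have tm: "40 * (t * m) \<le> ?n - 1" by (rule tm_le[OF T])
  have n1le: "n1 \<le> ?n" using n by simp
  have cV'N1: "card V' \<ge> N1" using cV' cW tm n1le unfolding n1_def by linarith
  have n2: "2 \<le> ?n" using n1le unfolding n1_def by simp
  define L where "L = link H u V'"
  have kgL: "kgraph_on (r - 1) V' L" unfolding L_def by (rule kgraph_link[OF H V(1) uV' V'V])
  define S where "S w = {f. f \<subseteq> V - {u} \<and> card f = r - 1 \<and> w \<in> f}" for w
  have cover: "link H u (V - {u}) \<subseteq> L \<union> (\<Union>w\<in>W. S w)"
  proof
    fix f assume f: "f \<in> link H u (V - {u})"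
    have kgf: "kgraph_on (r - 1) (V - {u}) (link H u (V - {u}))" by (rule kgraph_link[OF H V(1)]) auto
    then have fk: "f \<subseteq> V - {u}" "card f = r - 1" using f unfolding kgraph_on_def by auto
    show "f \<in> L \<union> (\<Union>w\<in>W. S w)"
    proof (cases "f \<inter> W = {}")
      case True
      then have "f \<subseteq> V'" using fk unfolding V'_def by blast
      then show ?thesis using f unfolding L_def link_def by simp
    next
      case False
      then obtain w where "w \<in> f" "w \<in> W" by blast
      then show ?thesis using fk unfolding S_def by blast
    qed
  qed
  have finS: "finite (S w)" for w
    unfolding S_def by (rule finite_subset[of _ "Pow (V - {u})"]) (use V(1) in auto)
  have cS: "card (S w) \<le> (?n - 2) choose (r - 2)" if "w \<in> W" for w
  proof -
    have "card (S w) \<le> (card (V - {u}) - 1) choose (r - 1 - 1)"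
      unfolding S_def by (rule card_sets_containing) (use V that WV r2 in auto)
    then show ?thesis using V by (simp add: numeral_2_eq_2 diff_diff_add)
  qed
  have "deg H u = card (link H u (V - {u}))" by (rule card_deg_link[OF H V])
  also have "\<dots> \<le> card (L \<union> (\<Union>w\<in>W. S w))"
  proof (rule card_mono[OF _ cover])
    have finL: "finite L" using kgraph_Pow[OF kgL] finV' by (meson finite_Pow_iff finite_subset)
    have "finite W" using finite_subset[OF WV] V(1) by simp
    then show "finite (L \<union> (\<Union>w\<in>W. S w))" using finL finS by simp
  qed
  also have "\<dots> \<le> card L + card (\<Union>w\<in>W. S w)" by (rule card_Un_le)
  also have "card (\<Union>w\<in>W. S w) \<le> (\<Sum>w\<in>W. card (S w))" by (rule card_UN_le) (use finite_subset[OF WV] V(1) in auto)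
  also have "\<dots> \<le> (\<Sum>w\<in>W. (?n - 2) choose (r - 2))" by (rule sum_mono) (rule cS)
  also have "\<dots> = card W * ((?n - 2) choose (r - 2))" by simp
  also have "\<dots> \<le> t * m * ((?n - 2) choose (r - 2))" using cW by simp
  finally have degL: "deg H u \<le> card L + t * m * ((?n - 2) choose (r - 2))" by simp
  have KX': "real (t * ((?n - 2) choose (r - 2))) * 40 * real m ^ 2 \<le> \<delta> * real ?N"
    by (rule KX[OF n2 T])
  have B: "real (t * m * ((?n - 2) choose (r - 2))) \<le> \<delta> * real ?N / (40 * real m)"
  proof -
    let ?C = "real ((?n - 2) choose (r - 2))"
    have E: "real t * real m * ?C * (40 * real m) = real t * ?C * 40 * real m ^ 2"
      by (simp add: power2_eq_square)
    have K2: "real t * ?C * 40 * real m ^ 2 \<le> \<delta> * real ?N" using KX' by (simp only: of_nat_mult)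
    have A: "real t * real m * ?C * (40 * real m) \<le> \<delta> * real ?N" using E K2 by linarith
    have "real t * real m * ?C \<le> \<delta> * real ?N / (40 * real m)"
      by (rule pos_le_divide_eq[THEN iffD2]) (use mpos A in auto)
    then show ?thesis by (simp only: of_nat_mult)
  qed
  have Lbig: "real (card L) \<ge> (p + \<delta> / (20 * real m)) * real ?N"
  proof -
    have "real (deg H u) \<le> real (card L) + real (t * m * ((?n - 2) choose (r - 2)))" using degL by linarith
    then have "\<theta> * real ?N - \<delta> * real ?N / (40 * real m) \<le> real (card L)" using dg B by linarith
    moreover have "(p + \<delta> / (20 * real m)) * real ?N \<le> \<theta> * real ?N - \<delta> * real ?N / (40 * real m)"
    proof -
      have "(p + \<delta> / (20 * real m)) \<le> \<theta> - \<delta> / (40 * real m)"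
        unfolding \<theta>_def using \<delta>_pos mpos by (simp add: field_simps)
      then have "(p + \<delta> / (20 * real m)) * real ?N \<le> (\<theta> - \<delta> / (40 * real m)) * real ?N"
        by (rule mult_right_mono) simp
      then show ?thesis by (simp add: algebra_simps)
    qed
    ultimately show ?thesis by linarith
  qed
  have "hasd 1 {0..<m - 1} F V' L"
  proof (rule ccontr)
    assume "\<not> hasd 1 {0..<m - 1} F V' L"
    from tur'[OF finV' cV'N1 kgL this]
    have "real (card L) < (p + \<delta> / (20 * real m)) * real (card V' choose (r - 1))" .
    moreover have "real (card V' choose (r - 1)) \<le> real ?N" using cV' by (simp add: binomial_right_mono)
    moreover have "p + \<delta> / (20 * real m) \<ge> 0" using p0 \<delta>_pos mpos by simp
    ultimately have "real (card L) < (p + \<delta> / (20 * real m)) * real ?N"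
      by (meson mult_left_mono order_less_le_trans)
    then show False using Lbig by linarith
  qed
  then obtain \<psi> where \<psi>: "embeds {0..<m - 1} F V' (link H u V') \<psi>" unfolding hasd_1 L_def by blast
  have \<psi>': "embeds {0..<m} Fh (insert u V') H (\<psi>(m - 1 := u))" by (rule link_embed[OF m1 uV' kgF \<psi>])
  have \<psi>V: "embeds {0..<m} Fh V H (\<psi>(m - 1 := u))" by (rule embeds_mono[OF \<psi>']) (use V(2) V'V in auto)
  have e: "\<forall>i<t. embeds {0..<m} Fh V H (\<phi> i)"
  proof (intro allI impI)
    fix i assume "i < t"
    then have "embeds {0..<m} Fh (V - {u}) {e\<in>H. u \<notin> e} (\<phi> i)" using \<phi>e by blast
    then show "embeds {0..<m} Fh V H (\<phi> i)" by (rule embeds_mono) auto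
  qed
  have dp: "\<forall>i<t. \<phi> i ` {0..<m} \<inter> (\<psi>(m - 1 := u)) ` {0..<m} = {}"
  proof (intro allI impI)
    fix i assume i: "i < t"
    have "(\<psi>(m - 1 := u)) ` {0..<m} \<subseteq> insert u V'" using \<psi>' unfolding embeds_def by blast
    moreover have "\<phi> i ` {0..<m} \<subseteq> W" using \<phi>W[OF i] .
    moreover have "W \<inter> insert u V' = {}" using WV unfolding V'_def by blast
    ultimately show "\<phi> i ` {0..<m} \<inter> (\<psi>(m - 1 := u)) ` {0..<m} = {}" by blast
  qed
  show ?thesis by (rule hasd_Suc_intro[OF e \<phi>d \<psi>V dp])
qed

end


context Main begin

lemma HD:
  assumes V: "finite V" and H: "kgraph_on r V H" and t1: "1 \<le> t"
    and n: "card V \<ge> n1 + t"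
    and T: "real t * real (r - 1) * 40 * real m ^ 2 \<le> \<delta> * real (card V - 1)"
    and no: "\<not> hasH (Suc t) V H"
    and big: "card H \<ge> Jn r (card V) t + ex' (card V - t)"
  shows "\<exists>u\<in>V. real (deg H u) \<ge> \<theta> * real ((card V - 1) choose (r - 1))"
proof (rule ccontr)
  let ?n = "card V"
  let ?N = "(?n - 1) choose (r - 1)"
  assume "\<not> (\<exists>u\<in>V. real (deg H u) \<ge> \<theta> * real ?N)"
  then have small: "\<And>u. u \<in> V \<Longrightarrow> real (deg H u) \<le> \<theta> * real ?N" by force
  obtain s where s: "s \<le> t" "hasH s V H" "\<not> hasH (Suc s) V H"
    using exists_max_s[of "\<lambda>s. hasH s V H" t] hasd_zero no by blast
  obtain \<phi> where \<phi>e: "\<forall>i<s. embeds {0..<m} Fh V H (\<phi> i)"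
    and \<phi>d: "\<forall>i<s. \<forall>j<s. i \<noteq> j \<longrightarrow> \<phi> i ` {0..<m} \<inter> \<phi> j ` {0..<m} = {}"
    using s(2) unfolding hasd_def by (elim exE conjE) (rule that)
  define U where "U = (\<Union>i\<in>{..<s}. \<phi> i ` {0..<m})"
  have \<phi>U: "\<phi> i ` {0..<m} \<subseteq> U" if "i < s" for i unfolding U_def using that by blast
  have emb_i: "embeds {0..<m} Fh V H (\<phi> i)" if "i < s" for i using \<phi>e that by blast
  have UV: "U \<subseteq> V"
  proof
    fix x assume "x \<in> U"
    then obtain i where i: "i < s" "x \<in> \<phi> i ` {0..<m}" unfolding U_def by blast
    then show "x \<in> V" using emb_i[OF i(1)] unfolding embeds_def by blast
  qed
  have cU: "card U = s * m"
  proof -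
    have "card U = (\<Sum>i\<in>{..<s}. card (\<phi> i ` {0..<m}))"
      unfolding U_def by (rule card_UN_disjoint) (use \<phi>d in auto)
    also have "\<dots> = (\<Sum>i\<in>{..<s}. m)"
    proof (rule sum.cong)
      fix i assume "i \<in> {..<s}"
      then have "inj_on (\<phi> i) {0..<m}" using emb_i unfolding embeds_def by simp
      then show "card (\<phi> i ` {0..<m}) = m" by (simp add: card_image)
    qed simp
    finally show ?thesis by simp
  qed
  have finH: "finite H" using kgraph_Pow[OF H] V by (meson finite_Pow_iff finite_subset)
  define HU where "HU = {e\<in>H. e \<inter> U = {}}"
  have kgHU: "kgraph_on r (V - U) HU" using H unfolding HU_def kgraph_on_def by auto
  have freeHU: "\<not> hasH 1 (V - U) HU"
  proof
    assume "hasH 1 (V - U) HU"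
    then obtain \<psi> where \<psi>: "embeds {0..<m} Fh (V - U) HU \<psi>" unfolding hasd_1 by blast
    have \<psi>V: "embeds {0..<m} Fh V H \<psi>" by (rule embeds_mono[OF \<psi>]) (auto simp: HU_def)
    have dp: "\<forall>i<s. \<phi> i ` {0..<m} \<inter> \<psi> ` {0..<m} = {}"
    proof (intro allI impI)
      fix i assume i: "i < s"
      have "\<psi> ` {0..<m} \<subseteq> V - U" using \<psi> unfolding embeds_def by blast
      then show "\<phi> i ` {0..<m} \<inter> \<psi> ` {0..<m} = {}" using \<phi>U[OF i] by blast
    qed
    have "hasH (Suc s) V H" by (rule hasd_Suc_intro[OF \<phi>e \<phi>d \<psi>V dp])
    then show False using s(3) by simp
  qed
  have cVU: "card (V - U) = ?n - s * m" using cU UV V by (simp add: card_Diff_subset finite_subset)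
  have cHU: "card HU \<le> ex' (?n - s * m)"
  proof -
    have "card HU \<le> exH (V - U)" using free_le[OF _ kgHU freeHU] V by simp
    also have "\<dots> = ex' (?n - s * m)" using exV_card[of "V - U"] V cVU by simp
    finally show ?thesis .
  qed
  have cover: "H \<subseteq> HU \<union> (\<Union>u\<in>U. {e\<in>H. u \<in> e})" unfolding HU_def by blast
  have finU: "finite U" using finite_subset[OF UV V] .
  have "card H \<le> card (HU \<union> (\<Union>u\<in>U. {e\<in>H. u \<in> e}))"
    by (rule card_mono[OF _ cover]) (use finH finU in \<open>auto simp: HU_def\<close>)
  also have "\<dots> \<le> card HU + card (\<Union>u\<in>U. {e\<in>H. u \<in> e})" by (rule card_Un_le)
  also have "card (\<Union>u\<in>U. {e\<in>H. u \<in> e}) \<le> (\<Sum>u\<in>U. card {e\<in>H. u \<in> e})" by (rule card_UN_le[OF finU])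
  finally have cH: "card H \<le> card HU + (\<Sum>u\<in>U. deg H u)" unfolding deg_def by simp
  have sd: "real (\<Sum>u\<in>U. deg H u) \<le> real (card U) * (\<theta> * real ?N)"
    unfolding of_nat_sum by (rule sum_bounded_above) (use small UV in auto)
  have R1: "real (card H) \<le> real (ex' (?n - s * m)) + real (s * m) * (\<theta> * real ?N)"
  proof -
    have "real (card H) \<le> real (card HU) + real (\<Sum>u\<in>U. deg H u)" using cH by linarith
    moreover have "real (card HU) \<le> real (ex' (?n - s * m))" using cHU by simp
    moreover have "real (card U) = real (s * m)" using cU by simp
    ultimately show ?thesis using sd by simp
  qed
  have tm: "40 * (t * m) \<le> ?n - 1" by (rule tm_le[OF T])
  have n1le: "n1 + t \<le> ?n" using n by simp
  have thN: "\<theta> * real ?N \<ge> 0" using \<theta>_nonneg by simp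
  have R2: "real (ex' (?n - s * m)) + real (s * m) * (\<theta> * real ?N) \<le> real (ex' (?n - t)) + real t * (real m * (\<theta> * real ?N))"
  proof (cases "s * m \<le> t")
    case True
    have b: "N1 \<le> ?n - t" using n1le unfolding n1_def by simp
    have "real (ex' (?n - t + (t - s * m))) \<le> real (ex' (?n - t)) + real (t - s * m) * ((p + \<delta> / (20 * real m)) * real ?N)"
      by (rule smooth_iter[OF b]) (use True n1le in simp)
    moreover have "?n - t + (t - s * m) = ?n - s * m" using True n1le by simp
    moreover have "real (t - s * m) * ((p + \<delta> / (20 * real m)) * real ?N) \<le> real (t - s * m) * (\<theta> * real ?N)"
      by (intro mult_left_mono mult_right_mono eps_le) auto
    ultimately have A: "real (ex' (?n - s * m)) \<le> real (ex' (?n - t)) + real (t - s * m) * (\<theta> * real ?N)" by simp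
    have "real (t - s * m) * (\<theta> * real ?N) + real (s * m) * (\<theta> * real ?N) = real t * (\<theta> * real ?N)"
      using True by (simp add: of_nat_diff algebra_simps)
    moreover have "real t * (\<theta> * real ?N) \<le> real t * (real m * (\<theta> * real ?N))"
      using mpos thN by (intro mult_left_mono) (auto simp: mult_le_cancel_right1)
    ultimately show ?thesis using A by linarith
  next
    case False
    have sm: "s * m \<le> t * m" using s(1) by simp
    have mb: "m \<le> ?n - s * m" using sm tm n1le unfolding n1_def by linarith
    have "ex' (?n - s * m) \<le> ex' (?n - s * m + (s * m - t))" by (rule mono_ex[OF mb])
    moreover have "?n - s * m + (s * m - t) = ?n - t" using False sm tm n1le by linarith
    ultimately have A: "real (ex' (?n - s * m)) \<le> real (ex' (?n - t))" by simp
    have "real (s * m) * (\<theta> * real ?N) \<le> real (t * m) * (\<theta> * real ?N)"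
    proof -
      have smr: "real (s * m) \<le> real (t * m)" using sm by (simp only: of_nat_le_iff)
      show ?thesis by (rule mult_right_mono[OF smr thN])
    qed
    then show ?thesis using A by (simp add: algebra_simps)
  qed
  have n2: "2 \<le> ?n" using n1le unfolding n1_def by simp
  have rn: "r \<le> ?n" using n1le rm unfolding n1_def by simp
  have Npos: "real ?N \<ge> 1" using rn r2 by (simp add: Suc_leI)
  have J1: "((?n - t) choose r) + t * ((?n - t) choose (r - 1)) \<le> ?n choose r"
    using binom_BL2[of r "?n - t" t] r2 n1le by simp
  have J2: "t * ((?n - t) choose (r - 1)) \<le> Jn r ?n t" using J1 unfolding Jn_def by simp
  have B1: "?N \<le> ((?n - 1 - (t - 1)) choose (r - 1)) + (t - 1) * ((?n - 1 - 1) choose (r - 1 - 1))"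
    by (rule binom_BL1) (use r2 t1 n1le in auto)
  have B1': "?N \<le> ((?n - t) choose (r - 1)) + (t - 1) * ((?n - 2) choose (r - 2))"
    using B1 t1 by (simp add: numeral_2_eq_2 diff_diff_add)
  have KX': "real (t * ((?n - 2) choose (r - 2))) * 40 * real m ^ 2 \<le> \<delta> * real ?N" by (rule KX[OF n2 T])
  have m2: "real m ^ 2 \<ge> 1" using mpos by (simp add: one_le_power)
  have K3: "real ((t - 1) * ((?n - 2) choose (r - 2))) \<le> \<delta> * real ?N / 40"
  proof -
    have "(t - 1) * ((?n - 2) choose (r - 2)) \<le> t * ((?n - 2) choose (r - 2))" by (rule mult_right_mono) auto
    then have "real ((t - 1) * ((?n - 2) choose (r - 2))) \<le> real (t * ((?n - 2) choose (r - 2)))" by (simp only: of_nat_le_iff)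
    moreover have "real (t * ((?n - 2) choose (r - 2))) * 40 \<le> real (t * ((?n - 2) choose (r - 2))) * 40 * real m ^ 2"
      using m2 by (intro mult_left_mono[of 1 "real m ^ 2", simplified]) auto
    ultimately show ?thesis using KX' by linarith
  qed
  have Cnt: "real ((?n - t) choose (r - 1)) \<ge> real ?N - \<delta> * real ?N / 40"
    using B1' K3 by linarith
  define X where "X = real t * real ?N"
  have Xpos: "X \<ge> 1" unfolding X_def using t1 Npos by (metis of_nat_1 of_nat_le_iff mult_mono' zero_le_one mult_1)
  have LB: "real (card H) \<ge> X - \<delta> * X / 40 + real (ex' (?n - t))"
  proof -
    have "real (card H) \<ge> real (Jn r ?n t) + real (ex' (?n - t))" using big by linarith
    moreover have "real (Jn r ?n t) \<ge> real t * real ((?n - t) choose (r - 1))" using J2 by (metis of_nat_le_iff of_nat_mult)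
    moreover have "real t * real ((?n - t) choose (r - 1)) \<ge> real t * (real ?N - \<delta> * real ?N / 40)"
      using Cnt by (intro mult_left_mono) auto
    moreover have "real t * (real ?N - \<delta> * real ?N / 40) = X - \<delta> * X / 40" unfolding X_def by (simp add: algebra_simps)
    ultimately show ?thesis by linarith
  qed
  have UB: "real (card H) \<le> real (ex' (?n - t)) + (X - 9 * \<delta> * X / 10)"
  proof -
    have "real t * (real m * (\<theta> * real ?N)) = (real m * \<theta>) * X" unfolding X_def by (simp add: algebra_simps)
    also have "\<dots> = X - 9 * \<delta> * X / 10" unfolding m\<theta> by (simp add: algebra_simps)
    finally show ?thesis using R1 R2 by linarith
  qed
  have "\<delta> * X > 0" using \<delta>_pos Xpos by simp
  then show False using LB UB by linarith
qed

end


context Main begin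

lemma MI:
  "finite V \<Longrightarrow> card V \<ge> n1 + t \<Longrightarrow> real t * real (r - 1) * 40 * real m ^ 2 \<le> \<delta> * real (card V - 1)
   \<Longrightarrow> kgraph_on r V H \<Longrightarrow> \<not> hasH (Suc t) V H \<Longrightarrow>
   card H \<le> Jn r (card V) t + ex' (card V - t) \<and>
   (card H = Jn r (card V) t + ex' (card V - t) \<longrightarrow>
     (\<exists>T. T \<subseteq> V \<and> card T = t \<and> {e. e \<subseteq> V \<and> card e = r \<and> e \<inter> T \<noteq> {}} \<subseteq> H
          \<and> \<not> hasH 1 (V - T) {e\<in>H. e \<subseteq> V - T}))"
proof (induction t arbitrary: V H)
  case 0
  have c: "card H \<le> ex' (card V)"
    using free_le[OF 0(1) 0(4)] 0(5) exV_card[OF 0(1)] by simp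
  have eqH: "{e\<in>H. e \<subseteq> V - {}} = H" using 0(4) unfolding kgraph_on_def by auto
  have "\<not> hasH 1 (V - {}) {e\<in>H. e \<subseteq> V - {}}" using 0(5) eqH by simp
  then have "\<exists>T. T \<subseteq> V \<and> card T = 0 \<and> {e. e \<subseteq> V \<and> card e = r \<and> e \<inter> T \<noteq> {}} \<subseteq> H
          \<and> \<not> hasH 1 (V - T) {e\<in>H. e \<subseteq> V - T}"
    by (intro exI[of _ "{}"]) simp
  then show ?case using c unfolding Jn_def by simp
next
  case (Suc t)
  let ?n = "card V"
  let ?N = "(?n - 1) choose (r - 1)"
  have V: "finite V" and n: "card V \<ge> n1 + Suc t" and T: "real (Suc t) * real (r - 1) * 40 * real m ^ 2 \<le> \<delta> * real (card V - 1)"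
    and H: "kgraph_on r V H" and no: "\<not> hasH (Suc (Suc t)) V H" using Suc.prems by auto
  show ?case
  proof (cases "card H < Jn r ?n (Suc t) + ex' (?n - Suc t)")
    case True then show ?thesis by simp
  next
    case False
    then have big: "card H \<ge> Jn r ?n (Suc t) + ex' (?n - Suc t)" by simp
    obtain u where u: "u \<in> V" "real (deg H u) \<ge> \<theta> * real ?N"
      using HD[OF V H _ n T no big] by auto
    define Hu where "Hu = {e\<in>H. u \<notin> e}"
    have noHu: "\<not> hasH (Suc t) (V - {u}) Hu"
    proof
      assume "hasH (Suc t) (V - {u}) Hu"
      then have "hasH (Suc (Suc t)) V H" using Ext[OF V u(1) H n T u(2)] unfolding Hu_def by blast
      then show False using no by simp
    qed
    have n1le: "n1 + Suc t \<le> ?n" using n by simp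
    have n2: "2 \<le> ?n" using n1le unfolding n1_def by simp
    have cVu: "card (V - {u}) = ?n - 1" using V u(1) by simp
    have kgHu: "kgraph_on r (V - {u}) Hu" using H unfolding Hu_def kgraph_on_def by auto
    have T': "real t * real (r - 1) * 40 * real m ^ 2 \<le> \<delta> * real (card (V - {u}) - 1)"
    proof -
      have a: "real (r - 1) * 40 * real m ^ 2 \<ge> 1"
      proof -
        have "real m ^ 2 \<ge> 1" using mpos by (simp add: one_le_power)
        then have b: "1 \<le> 40 * real m ^ 2" by linarith
        have "1 * 1 \<le> real (r - 1) * (40 * real m ^ 2)" by (rule mult_mono[OF rpos b]) auto
        then show ?thesis by (simp only: mult.assoc mult_1)
      qed
      have e1: "real (Suc t) * real (r - 1) * 40 * real m ^ 2 = real t * real (r - 1) * 40 * real m ^ 2 + real (r - 1) * 40 * real m ^ 2"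
        by (simp add: algebra_simps)
      have e2: "real (card (V - {u}) - 1) = real (?n - 1) - 1" using cVu n2 by (simp add: of_nat_diff)
      have e3: "\<delta> * (real (?n - 1) - 1) = \<delta> * real (?n - 1) - \<delta>" by (simp add: algebra_simps)
      have "real t * real (r - 1) * 40 * real m ^ 2 \<le> \<delta> * (real (?n - 1) - 1)"
        using T a \<delta>_le1 e1 e3 by linarith
      then show ?thesis using e2 by simp
    qed
    have IH: "card Hu \<le> Jn r (?n - 1) t + ex' (?n - 1 - t) \<and>
      (card Hu = Jn r (?n - 1) t + ex' (?n - 1 - t) \<longrightarrow>
       (\<exists>T. T \<subseteq> V - {u} \<and> card T = t \<and> {e. e \<subseteq> V - {u} \<and> card e = r \<and> e \<inter> T \<noteq> {}} \<subseteq> Hu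
            \<and> \<not> hasH 1 (V - {u} - T) {e\<in>Hu. e \<subseteq> V - {u} - T}))"
      using Suc.IH[of "V - {u}" Hu] V n cVu T' kgHu noHu by simp
    have finH: "finite H" using kgraph_Pow[OF H] V by (meson finite_Pow_iff finite_subset)
    have split: "card H = card Hu + deg H u" unfolding Hu_def by (rule H_split_eq[OF finH])
    have dle: "deg H u \<le> ?N" by (rule deg_le[OF H V u(1)]) (use r2 in simp)
    have JJ: "Jn r (?n - 1) t + ?N = Jn r ?n (Suc t)"
    proof -
      obtain n' where n': "?n = Suc n'" using n2 by (cases ?n) auto
      obtain r' where r': "r = Suc r'" using r2 by (cases r) auto
      have "(n' - t) choose r \<le> n' choose r" by (rule binomial_right_mono) simp
      then show ?thesis unfolding Jn_def using n' r' by simp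
    qed
    have nt: "?n - 1 - t = ?n - Suc t" by simp
    have IH1: "card Hu \<le> Jn r (?n - 1) t + ex' (?n - Suc t)" using conjunct1[OF IH] nt by simp
    have bound: "card H \<le> Jn r ?n (Suc t) + ex' (?n - Suc t)"
      using IH1 split dle JJ by linarith
    show ?thesis
    proof (intro conjI impI)
      show "card H \<le> Jn r ?n (Suc t) + ex' (?n - Suc t)" by (rule bound)
    next
      assume eq: "card H = Jn r ?n (Suc t) + ex' (?n - Suc t)"
      have eqHu0: "card Hu = Jn r (?n - 1) t + ex' (?n - Suc t)"
        using IH1 split dle JJ eq by linarith
      have eqd: "deg H u = ?N"
        using IH1 split dle JJ eq by linarith
      have eqHu: "card Hu = Jn r (?n - 1) t + ex' (?n - 1 - t)" using eqHu0 nt by simp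
      obtain T' where T'1: "T' \<subseteq> V - {u}" and T'2: "card T' = t"
        and T'3: "{e. e \<subseteq> V - {u} \<and> card e = r \<and> e \<inter> T' \<noteq> {}} \<subseteq> Hu"
        and T'4: "\<not> hasH 1 (V - {u} - T') {e\<in>Hu. e \<subseteq> V - {u} - T'}"
        using conjunct2[OF IH] eqHu by blast
      have lk_sub: "link H u (V - {u}) \<subseteq> {f. f \<subseteq> V - {u} \<and> card f = r - 1}"
        using kgraph_link[OF H V, of u "V - {u}"] unfolding kgraph_on_def by auto
      have lk_eq: "link H u (V - {u}) = {f. f \<subseteq> V - {u} \<and> card f = r - 1}"
      proof (rule card_subset_eq[OF _ lk_sub])
        show "finite {f. f \<subseteq> V - {u} \<and> card f = r - 1}" using V by simp
        have "card {f. f \<subseteq> V - {u} \<and> card f = r - 1} = ?N" using V cVu by (simp add: n_subsets)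
        then show "card (link H u (V - {u})) = card {f. f \<subseteq> V - {u} \<and> card f = r - 1}"
          using card_deg_link[OF H V u(1)] eqd by simp
      qed
      let ?T = "insert u T'"
      have "?T \<subseteq> V" using T'1 u(1) by blast
      moreover have "card ?T = Suc t"
      proof -
        have "finite T'" using finite_subset[OF T'1] V by simp
        moreover have "u \<notin> T'" using T'1 by blast
        ultimately show ?thesis using T'2 by simp
      qed
      moreover have "{e. e \<subseteq> V \<and> card e = r \<and> e \<inter> ?T \<noteq> {}} \<subseteq> H"
      proof
        fix e assume e: "e \<in> {e. e \<subseteq> V \<and> card e = r \<and> e \<inter> ?T \<noteq> {}}"
        then have eV: "e \<subseteq> V" and ce: "card e = r" and eT: "e \<inter> ?T \<noteq> {}" by auto
        show "e \<in> H"
        proof (cases "u \<in> e")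
          case True
          have fe: "finite e" using finite_subset[OF eV V] .
          have "e - {u} \<in> {f. f \<subseteq> V - {u} \<and> card f = r - 1}" using eV ce fe True by auto
          then have "e - {u} \<in> link H u (V - {u})" using lk_eq by simp
          then have "insert u (e - {u}) \<in> H" unfolding link_def by simp
          then show ?thesis using True by (simp add: insert_absorb)
        next
          case False
          then have "e \<subseteq> V - {u}" "e \<inter> T' \<noteq> {}" using eV eT by auto
          then have "e \<in> Hu" using T'3 ce by blast
          then show ?thesis unfolding Hu_def by simp
        qed
      qed
      moreover have "\<not> hasH 1 (V - ?T) {e\<in>H. e \<subseteq> V - ?T}"
      proof -
        have "V - ?T = V - {u} - T'" by blast
        moreover have "{e\<in>H. e \<subseteq> V - ?T} = {e\<in>Hu. e \<subseteq> V - {u} - T'}" unfolding Hu_def by blast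
        ultimately show ?thesis using T'4 by simp
      qed
      ultimately show "\<exists>T. T \<subseteq> V \<and> card T = Suc t \<and> {e. e \<subseteq> V \<and> card e = r \<and> e \<inter> T \<noteq> {}} \<subseteq> H
            \<and> \<not> hasH 1 (V - T) {e\<in>H. e \<subseteq> V - T}" by blast
    qed
  qed
qed

end


definition Meet :: "nat \<Rightarrow> nat \<Rightarrow> nat set \<Rightarrow> nat set set" where
  "Meet r n T = {e. e \<subseteq> {0..<n} \<and> card e = r \<and> e \<inter> T \<noteq> {}}"

lemma join_Meet: "join_clique r n t G = G \<union> Meet r n {n - t..<n}"
  unfolding join_clique_def Meet_def by simp

lemma card_Meet:
  assumes "T \<subseteq> {0..<n}"
  shows "card (Meet r n T) = (n choose r) - ((n - card T) choose r)"
proof -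
  have "Meet r n T = {e. e \<subseteq> {0..<n} \<and> card e = r} - {e. e \<subseteq> {0..<n} - T \<and> card e = r}"
    unfolding Meet_def by blast
  moreover have "{e. e \<subseteq> {0..<n} - T \<and> card e = r} \<subseteq> {e. e \<subseteq> {0..<n} \<and> card e = r}" by blast
  moreover have "card ({0..<n} - T) = n - card T" using assms by (simp add: card_Diff_subset finite_subset)
  ultimately show ?thesis by (simp add: card_Diff_subset n_subsets)
qed

lemma kgraph_join:
  assumes "kgraph_on r {0..<n - t} G"
  shows "kgraph_on r {0..<n} (join_clique r n t G)"
  unfolding kgraph_on_def
proof
  fix e assume e: "e \<in> join_clique r n t G"
  show "e \<subseteq> {0..<n} \<and> card e = r"
  proof (cases "e \<in> G")
    case True
    then have "e \<subseteq> {0..<n - t}" "card e = r" using assms unfolding kgraph_on_def by auto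
    moreover have "{0..<n - t} \<subseteq> {0..<n}" by auto
    ultimately show ?thesis by blast
  next
    case False
    then show ?thesis using e unfolding join_clique_def by blast
  qed
qed

lemma card_join:
  assumes "kgraph_on r {0..<n - t} G" "t \<le> n"
  shows "card (join_clique r n t G) = card G + Jn r n t"
proof -
  have d: "G \<inter> Meet r n {n - t..<n} = {}" using assms(1) unfolding kgraph_on_def Meet_def by fastforce
  have fG: "finite G" using kgraph_Pow[OF assms(1)] by (meson finite_Pow_iff finite_atLeastLessThan finite_subset)
  have fM: "finite (Meet r n {n - t..<n})" unfolding Meet_def
    by (rule finite_subset[of _ "Pow {0..<n}"]) auto
  have "card (Meet r n {n - t..<n}) = Jn r n t" unfolding Jn_def
    using card_Meet[of "{n - t..<n}" n r] assms(2) by simp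
  then show ?thesis unfolding join_Meet using card_Un_disjoint[OF fG fM d] by simp
qed

lemma join_free:
  assumes m1: "1 \<le> m" and FhV: "\<forall>e\<in>Fh. e \<subseteq> {0..<m}"
    and kg: "kgraph_on r {0..<n - t} G" and free: "\<not> hasd 1 {0..<m} Fh {0..<n - t} G"
  shows "\<not> hasd (Suc t) {0..<m} Fh {0..<n} (join_clique r n t G)"
proof
  assume "hasd (Suc t) {0..<m} Fh {0..<n} (join_clique r n t G)"
  then obtain \<phi> where \<phi>e: "\<forall>i<Suc t. embeds {0..<m} Fh {0..<n} (join_clique r n t G) (\<phi> i)"
    and \<phi>d: "\<forall>i<Suc t. \<forall>j<Suc t. i \<noteq> j \<longrightarrow> \<phi> i ` {0..<m} \<inter> \<phi> j ` {0..<m} = {}"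
    unfolding hasd_def by (elim exE conjE) (rule that)
  let ?T = "{n - t..<n}"
  have meet: "\<phi> i ` {0..<m} \<inter> ?T \<noteq> {}" if i: "i < Suc t" for i
  proof
    assume dis: "\<phi> i ` {0..<m} \<inter> ?T = {}"
    have e: "embeds {0..<m} Fh {0..<n} (join_clique r n t G) (\<phi> i)" using \<phi>e i by blast
    have "embeds {0..<m} Fh {0..<n - t} G (\<phi> i)"
      unfolding embeds_def
    proof (intro conjI ballI)
      show "inj_on (\<phi> i) {0..<m}" using e unfolding embeds_def by blast
      show "\<phi> i ` {0..<m} \<subseteq> {0..<n - t}"
      proof
        fix x assume x: "x \<in> \<phi> i ` {0..<m}"
        then have "x < n" using e unfolding embeds_def by auto
        moreover have "x \<notin> ?T" using x dis by blast
        ultimately show "x \<in> {0..<n - t}" by auto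
      qed
      fix e' assume e': "e' \<in> Fh"
      have "\<phi> i ` e' \<in> join_clique r n t G" using e e' unfolding embeds_def by blast
      moreover have "\<phi> i ` e' \<inter> ?T = {}" using dis FhV e' by blast
      ultimately show "\<phi> i ` e' \<in> G" unfolding join_clique_def by blast
    qed
    then show False using free unfolding hasd_1 by blast
  qed
  define c where "c i = (SOME x. x \<in> \<phi> i ` {0..<m} \<inter> ?T)" for i
  have c: "c i \<in> \<phi> i ` {0..<m} \<inter> ?T" if "i < Suc t" for i
    unfolding c_def using meet[OF that] by (metis ex_in_conv someI_ex)
  have "inj_on c {..<Suc t}"
  proof (rule inj_onI)
    fix i j assume ij: "i \<in> {..<Suc t}" "j \<in> {..<Suc t}" "c i = c j"
    show "i = j"
    proof (rule ccontr)
      assume "i \<noteq> j"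
      then have "\<phi> i ` {0..<m} \<inter> \<phi> j ` {0..<m} = {}" using \<phi>d ij by auto
      moreover have "c i \<in> \<phi> i ` {0..<m}" using c[of i] ij(1) by blast
      moreover have "c j \<in> \<phi> j ` {0..<m}" using c[of j] ij(2) by blast
      ultimately show False using ij(3) by auto
    qed
  qed
  moreover have "c ` {..<Suc t} \<subseteq> ?T" using c by blast
  ultimately have "card {..<Suc t} \<le> card ?T" by (intro card_inj_on_le) auto
  then show False by simp
qed

lemma bij_exists:
  assumes T: "T \<subseteq> {0..<n}" "card T = t"
  shows "\<exists>\<sigma>. bij_betw \<sigma> {0..<n} {0..<n} \<and> \<sigma> ` {n - t..<n} = T \<and> \<sigma> ` {0..<n - t} = {0..<n} - T"
proof -
  have tn: "t \<le> n" using T card_mono[OF _ T(1)] by fastforce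
  have c1: "card ({0..<n} - T) = card {0..<n - t}" using T by (simp add: card_Diff_subset finite_subset)
  have c2: "card {n - t..<n} = card T" using T tn by simp
  obtain f1 where f1: "bij_betw f1 {0..<n - t} ({0..<n} - T)"
    using finite_same_card_bij[of "{0..<n - t}" "{0..<n} - T"] c1 by auto
  obtain f2 where f2: "bij_betw f2 {n - t..<n} T"
    using finite_same_card_bij[of "{n - t..<n}" T] c2 T finite_subset by fastforce
  define \<sigma> where "\<sigma> x = (if x < n - t then f1 x else f2 x)" for x
  have b1: "bij_betw \<sigma> {0..<n - t} ({0..<n} - T)"
    using f1 by (rule bij_betw_cong[THEN iffD1, rotated]) (simp add: \<sigma>_def)
  have b2: "bij_betw \<sigma> {n - t..<n} T"
    using f2 by (rule bij_betw_cong[THEN iffD1, rotated]) (simp add: \<sigma>_def)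
  have "bij_betw \<sigma> ({0..<n - t} \<union> {n - t..<n}) (({0..<n} - T) \<union> T)"
    by (rule bij_betw_combine[OF b1 b2]) blast
  moreover have "{0..<n - t} \<union> {n - t..<n} = {0..<n}" using tn by auto
  moreover have "({0..<n} - T) \<union> T = {0..<n}" using T by blast
  ultimately have "bij_betw \<sigma> {0..<n} {0..<n}" by simp
  then show ?thesis using b1 b2 unfolding bij_betw_def by blast
qed


lemma imH_Un: "imH \<sigma> (A \<union> B) = imH \<sigma> A \<union> imH \<sigma> B"
  unfolding imH_def by (rule image_Un)

lemma imH_inv2:
  assumes "bij_betw \<sigma> V V" "K \<subseteq> Pow V"
  shows "imH \<sigma> (imH (inv_into V \<sigma>) K) = K"
proof -
  have s: "\<sigma> ` V = V" using assms(1) unfolding bij_betw_def by simp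
  have "imH \<sigma> (imH (inv_into V \<sigma>) K) = (\<lambda>e. \<sigma> ` inv_into V \<sigma> ` e) ` K"
    unfolding imH_def by (simp add: image_image)
  also have "\<dots> = (\<lambda>e. e) ` K"
  proof (rule image_cong)
    fix e assume "e \<in> K"
    then have "e \<subseteq> V" using assms(2) by blast
    then show "\<sigma> ` inv_into V \<sigma> ` e = e" by (rule image_inv_into_cancel[OF s])
  qed simp
  finally show ?thesis by simp
qed

lemma empty_free1: "F \<noteq> {} \<Longrightarrow> \<not> hasd 1 VF F V {}"
  using empty_free by simp

context Main begin

lemma FhV: "\<forall>e\<in>Fh. e \<subseteq> {0..<m}"
  using kgF m1 unfolding suspension_def kgraph_on_def by fastforce

lemma final_main:
  assumes n: "n \<ge> 2 * n1" and T: "real t * real (r - 1) * 40 * real m ^ 2 \<le> \<delta> * real (n - 1)"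
  shows "H \<in> EXs n r {0..<m} Fh (t + 1) \<longleftrightarrow>
         (\<exists>G \<in> EXs (n - t) r {0..<m} Fh 1. \<exists>\<sigma>. bij_betw \<sigma> {0..<n} {0..<n} \<and> H = (\<lambda>e. \<sigma> ` e) ` join_clique r n t G)"
proof -
  have tm: "40 * (t * m) \<le> n - 1" by (rule tm_le[OF T])
  have ttm: "t \<le> t * m" using m1 by simp
  have tn: "n1 + t \<le> n" using tm ttm n by linarith
  let ?V = "{0..<n}"
  have MIV: "card H' \<le> Jn r n t + ex' (n - t) \<and>
     (card H' = Jn r n t + ex' (n - t) \<longrightarrow>
       (\<exists>T. T \<subseteq> ?V \<and> card T = t \<and> {e. e \<subseteq> ?V \<and> card e = r \<and> e \<inter> T \<noteq> {}} \<subseteq> H'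
          \<and> \<not> hasH 1 (?V - T) {e\<in>H'. e \<subseteq> ?V - T}))"
    if "kgraph_on r ?V H'" "\<not> hasH (Suc t) ?V H'" for H'
  proof -
    have A: "finite ?V" "card ?V \<ge> n1 + t" "real t * real (r - 1) * 40 * real m ^ 2 \<le> \<delta> * real (card ?V - 1)"
      using tn T by simp_all
    show ?thesis using MI[OF A that, unfolded card_atLeastLessThan diff_zero] .
  qed
  have k0: "kgraph_on r {0..<n - t} {}" unfolding kgraph_on_def by simp
  obtain G0 where G0: "kgraph_on r {0..<n - t} G0" "\<not> hasH 1 {0..<n - t} G0" "card G0 = ex' (n - t)"
  proof -
    have "\<exists>G. kgraph_on r {0..<n - t} G \<and> \<not> hasH 1 {0..<n - t} G \<and> card G = exH {0..<n - t}"
      by (rule ex_attained[OF _ k0 empty_free1[OF Fh_ne]]) simp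
    then show ?thesis using that exs_exV by metis
  qed
  have tn': "t \<le> n" using tn by simp
  have EXval: "exs n r {0..<m} Fh (Suc t) = Jn r n t + ex' (n - t)"
  proof (rule antisym)
    have k0': "kgraph_on r ?V {}" unfolding kgraph_on_def by simp
    obtain Hm where Hm: "kgraph_on r ?V Hm" "\<not> hasH (Suc t) ?V Hm" "card Hm = exV r {0..<m} Fh (Suc t) ?V"
    proof -
      have e: "\<not> hasH (Suc t) ?V {}"
      proof
        assume "hasH (Suc t) ?V {}"
        then have "hasH 1 ?V {}" by (rule hasd_mono_s) simp
        then show False using empty_free1[OF Fh_ne] by blast
      qed
      have "\<exists>H. kgraph_on r ?V H \<and> \<not> hasH (Suc t) ?V H \<and> card H = exV r {0..<m} Fh (Suc t) ?V"
        by (rule ex_attained[OF _ k0' e]) simp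
      then show ?thesis using that by blast
    qed
    show "exs n r {0..<m} Fh (Suc t) \<le> Jn r n t + ex' (n - t)"
      using MIV[OF Hm(1,2)] Hm(3) exs_exV by simp
    have "card (join_clique r n t G0) \<le> exV r {0..<m} Fh (Suc t) ?V"
      by (rule free_le[OF _ kgraph_join[OF G0(1)] join_free[OF m1 FhV G0(1,2)]]) simp
    then show "Jn r n t + ex' (n - t) \<le> exs n r {0..<m} Fh (Suc t)"
      using card_join[OF G0(1) tn'] G0(3) exs_exV by simp
  qed
  show ?thesis
  proof
    assume "H \<in> EXs n r {0..<m} Fh (t + 1)"
    then have H: "kgraph_on r ?V H" "\<not> hasH (Suc t) ?V H" "card H = Jn r n t + ex' (n - t)"
      unfolding EXs_def has_disj_copies_hasd using EXval by auto
    obtain T where T1: "T \<subseteq> ?V" and T2: "card T = t" and T3: "{e. e \<subseteq> ?V \<and> card e = r \<and> e \<inter> T \<noteq> {}} \<subseteq> H"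
      and T4: "\<not> hasH 1 (?V - T) {e\<in>H. e \<subseteq> ?V - T}"
      using MIV[OF H(1,2)] H(3) by blast
    obtain \<sigma> where \<sigma>: "bij_betw \<sigma> ?V ?V" "\<sigma> ` {n - t..<n} = T" "\<sigma> ` {0..<n - t} = ?V - T"
      using bij_exists[OF T1 T2] by blast
    have inj\<sigma>: "inj_on \<sigma> ?V" using \<sigma>(1) unfolding bij_betw_def by simp
    have s\<sigma>: "\<sigma> ` ?V = ?V" using \<sigma>(1) unfolding bij_betw_def by simp
    let ?\<tau> = "inv_into ?V \<sigma>"
    define Hin where "Hin = {e\<in>H. e \<subseteq> ?V - T}"
    define G where "G = imH ?\<tau> Hin"
    have inj\<tau>: "inj_on ?\<tau> (?V - T)" by (rule inj_on_inv_into) (use s\<sigma> in auto)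
    have \<tau>V: "?\<tau> ` (?V - T) = {0..<n - t}"
      using \<sigma>(3) inv_into_image_cancel[OF inj\<sigma>, of "{0..<n - t}"] by auto
    have kgHin: "kgraph_on r (?V - T) Hin" using H(1) unfolding Hin_def kgraph_on_def by auto
    have kgG: "kgraph_on r {0..<n - t} G" unfolding G_def using kgraph_image[OF inj\<tau> kgHin] \<tau>V by simp
    have freeG: "\<not> hasH 1 {0..<n - t} G" unfolding G_def
      using hasd_image_iff[OF inj\<tau> kgHin] T4 \<tau>V unfolding Hin_def by simp
    have cG: "card G = card Hin" unfolding G_def by (rule card_imH[OF inj\<tau> kgHin])
    have MT: "Meet r n T \<subseteq> H" using T3 unfolding Meet_def by simp
    have Hsplit: "H = Meet r n T \<union> Hin"
    proof
      show "H \<subseteq> Meet r n T \<union> Hin"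
      proof
        fix e assume e: "e \<in> H"
        then have "e \<subseteq> ?V" "card e = r" using H(1) unfolding kgraph_on_def by auto
        then show "e \<in> Meet r n T \<union> Hin" using e unfolding Meet_def Hin_def by blast
      qed
      show "Meet r n T \<union> Hin \<subseteq> H" using MT unfolding Hin_def by blast
    qed
    have disj: "Meet r n T \<inter> Hin = {}" unfolding Meet_def Hin_def by blast
    have finH: "finite H" using kgraph_Pow[OF H(1)] by (meson finite_Pow_iff finite_atLeastLessThan finite_subset)
    have cMT: "card (Meet r n T) = Jn r n t" unfolding Jn_def using card_Meet[OF T1] T2 by simp
    have "card H = card (Meet r n T) + card Hin"
      using Hsplit disj finH by (metis card_Un_disjoint finite_Un)
    then have cHin: "card Hin = ex' (n - t)" using H(3) cMT by simp
    have GEX: "G \<in> EXs (n - t) r {0..<m} Fh 1"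
      unfolding EXs_def has_disj_copies_hasd using kgG freeG cG cHin by simp
    have imG: "imH \<sigma> G = Hin" unfolding G_def
      by (rule imH_inv2[OF \<sigma>(1)]) (use kgraph_Pow[OF kgHin] in auto)
    have kgM: "kgraph_on r ?V (Meet r n {n - t..<n})" unfolding Meet_def kgraph_on_def by auto
    have imM: "imH \<sigma> (Meet r n {n - t..<n}) = Meet r n T"
    proof (rule card_subset_eq)
      show "finite (Meet r n T)" unfolding Meet_def by (rule finite_subset[of _ "Pow ?V"]) auto
      show "imH \<sigma> (Meet r n {n - t..<n}) \<subseteq> Meet r n T"
      proof
        fix x assume "x \<in> imH \<sigma> (Meet r n {n - t..<n})"
        then obtain e where e: "e \<in> Meet r n {n - t..<n}" "x = \<sigma> ` e" unfolding imH_def by blast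
        have eV: "e \<subseteq> ?V" "card e = r" "e \<inter> {n - t..<n} \<noteq> {}" using e(1) unfolding Meet_def by auto
        have "\<sigma> ` e \<subseteq> ?V" using eV(1) s\<sigma> by blast
        moreover have "card (\<sigma> ` e) = r" using eV(1,2) inj\<sigma> by (simp add: card_image inj_on_subset)
        moreover have "\<sigma> ` e \<inter> T \<noteq> {}"
        proof -
          obtain y where "y \<in> e" "y \<in> {n - t..<n}" using eV(3) by blast
          then have "\<sigma> y \<in> \<sigma> ` e" "\<sigma> y \<in> T" using \<sigma>(2) by auto
          then show ?thesis by blast
        qed
        ultimately show "x \<in> Meet r n T" unfolding Meet_def e(2) by simp
      qed
      have "card (imH \<sigma> (Meet r n {n - t..<n})) = card (Meet r n {n - t..<n})" by (rule card_imH[OF inj\<sigma> kgM])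
      also have "\<dots> = Jn r n t" unfolding Jn_def using card_Meet[of "{n - t..<n}" n r] tn' by simp
      finally show "card (imH \<sigma> (Meet r n {n - t..<n})) = card (Meet r n T)" using cMT by simp
    qed
    have "H = imH \<sigma> (join_clique r n t G)"
      unfolding join_Meet imH_Un imG imM using Hsplit by blast
    then show "\<exists>G \<in> EXs (n - t) r {0..<m} Fh 1. \<exists>\<sigma>. bij_betw \<sigma> {0..<n} {0..<n} \<and> H = (\<lambda>e. \<sigma> ` e) ` join_clique r n t G"
      using GEX \<sigma>(1) unfolding imH_def by blast
  next
    assume "\<exists>G \<in> EXs (n - t) r {0..<m} Fh 1. \<exists>\<sigma>. bij_betw \<sigma> {0..<n} {0..<n} \<and> H = (\<lambda>e. \<sigma> ` e) ` join_clique r n t G"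
    then obtain G \<sigma> where G: "G \<in> EXs (n - t) r {0..<m} Fh 1" and \<sigma>: "bij_betw \<sigma> ?V ?V"
      and HG: "H = imH \<sigma> (join_clique r n t G)" unfolding imH_def by blast
    have G': "kgraph_on r {0..<n - t} G" "\<not> hasH 1 {0..<n - t} G" "card G = ex' (n - t)"
      using G unfolding EXs_def has_disj_copies_hasd by auto
    have inj\<sigma>: "inj_on \<sigma> ?V" using \<sigma> unfolding bij_betw_def by simp
    have s\<sigma>: "\<sigma> ` ?V = ?V" using \<sigma> unfolding bij_betw_def by simp
    have kgJ: "kgraph_on r ?V (join_clique r n t G)" by (rule kgraph_join[OF G'(1)])
    have frJ: "\<not> hasH (Suc t) ?V (join_clique r n t G)" by (rule join_free[OF m1 FhV G'(1,2)])
    have cJ: "card (join_clique r n t G) = Jn r n t + ex' (n - t)" using card_join[OF G'(1) tn'] G'(3) by simp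
    have "kgraph_on r ?V H" unfolding HG using kgraph_image[OF inj\<sigma> kgJ] s\<sigma> by simp
    moreover have "\<not> hasH (Suc t) ?V H" unfolding HG using hasd_image_iff[OF inj\<sigma> kgJ] frJ s\<sigma> by simp
    moreover have "card H = Jn r n t + ex' (n - t)" unfolding HG using card_imH[OF inj\<sigma> kgJ] cJ by simp
    ultimately show "H \<in> EXs n r {0..<m} Fh (t + 1)"
      unfolding EXs_def has_disj_copies_hasd using EXval by simp
  qed
qed

end


lemma blk_eq:
  assumes "a < (m::nat)" "b < m" "i * m + a = j * m + b"
  shows "i = j"
proof -
  have "(i * m + a) div m = i" using assms(1) by simp
  moreover have "(j * m + b) div m = j" using assms(2) by simp
  ultimately show ?thesis using assms(3) by simp
qed

lemma many_copies:
  assumes "Suc t * m \<le> n"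
  shows "hasd (Suc t) {0..<m} {} {0..<n} H"
proof -
  define \<phi> where "\<phi> i j = i * m + j" for i j :: nat
  have e: "\<forall>i<Suc t. embeds {0..<m} {} {0..<n} H (\<phi> i)"
  proof (intro allI impI)
    fix i assume i: "i < Suc t"
    have "inj_on (\<phi> i) {0..<m}" unfolding \<phi>_def by (rule inj_onI) simp
    moreover have "\<phi> i ` {0..<m} \<subseteq> {0..<n}"
    proof
      fix x assume "x \<in> \<phi> i ` {0..<m}"
      then obtain j where j0: "j \<in> {0..<m}" "x = \<phi> i j" by blast
      then have j: "j < m" "x = i * m + j" unfolding \<phi>_def by auto
      have A: "i * m + j < Suc i * m" using j(1) by simp
      have B: "Suc i * m \<le> Suc t * m" using i by (intro mult_le_mono1) simp
      have "i * m + j < n" using less_le_trans[OF A le_trans[OF B assms]] .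
      then show "x \<in> {0..<n}" using j(2) by simp
    qed
    ultimately show "embeds {0..<m} {} {0..<n} H (\<phi> i)" unfolding embeds_def by simp
  qed
  have d: "\<forall>i<Suc t. \<forall>j<Suc t. i \<noteq> j \<longrightarrow> \<phi> i ` {0..<m} \<inter> \<phi> j ` {0..<m} = {}"
  proof (intro allI impI)
    fix i j assume ij: "i < Suc t" "j < Suc t" "i \<noteq> j"
    show "\<phi> i ` {0..<m} \<inter> \<phi> j ` {0..<m} = {}"
    proof (rule ccontr)
      assume "\<phi> i ` {0..<m} \<inter> \<phi> j ` {0..<m} \<noteq> {}"
      then obtain x where "x \<in> \<phi> i ` {0..<m}" "x \<in> \<phi> j ` {0..<m}" by blast
      then obtain a b where "a \<in> {0..<m}" "b \<in> {0..<m}" "x = \<phi> i a" "x = \<phi> j b" by blast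
      then have "a < m" "b < m" "i * m + a = j * m + b" unfolding \<phi>_def by auto
      then have "i = j" by (rule blk_eq)
      then show False using ij by simp
    qed
  qed
  have "(\<forall>i<Suc t. embeds {0..<m} {} {0..<n} H (\<phi> i)) \<and> (\<forall>i<Suc t. \<forall>j<Suc t. i \<noteq> j \<longrightarrow> \<phi> i ` {0..<m} \<inter> \<phi> j ` {0..<m} = {})"
    using e d by (rule conjI)
  then show ?thesis unfolding hasd_def by (rule exI[of _ \<phi>])
qed

lemma t_bound:
  fixes d :: real
  assumes t: "real t \<le> d / (40 * real m ^ 2) * (real (n - 1) / real (r - 1))"
    and m1: "1 \<le> m" and r2: "2 \<le> r"
  shows "real t * real (r - 1) * 40 * real m ^ 2 \<le> d * real (n - 1)"
proof -
  have pos: "40 * real m ^ 2 * real (r - 1) > 0" using m1 r2 by simp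
  have "d / (40 * real m ^ 2) * (real (n - 1) / real (r - 1)) = d * real (n - 1) / (40 * real m ^ 2 * real (r - 1))"
    by (simp add: field_simps)
  then have "real t \<le> d * real (n - 1) / (40 * real m ^ 2 * real (r - 1))" using t by simp
  then have "real t * (40 * real m ^ 2 * real (r - 1)) \<le> d * real (n - 1)"
    using pos_le_divide_eq[OF pos] by blast
  then show ?thesis by (simp add: algebra_simps)
qed

theorem corollary1p9:
  fixes m r :: nat and F :: "nat set set"
  assumes "2 \<le> r" and "r \<le> m"
    and "kgraph_on (r - 1) {0..<m - 1} F"
    and "turan_density (r - 1) {0..<m - 1} F < 1 / real m"
  shows "\<exists>n0. \<forall>n\<ge>n0. \<forall>t::nat.
           real t \<le> min ((1 - real m * turan_density (r - 1) {0..<m - 1} F) / (5 * real m ^ 2)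
                            * (real (exs n r {0..<m} (suspension m F) 1) / real ((n - 1) choose (r - 1))))
                         ((1 - real m * turan_density (r - 1) {0..<m - 1} F) / (40 * real m ^ 2)
                            * (real (n - 1) / real (r - 1)))
           \<longrightarrow> (\<forall>H. H \<in> EXs n r {0..<m} (suspension m F) (t + 1) \<longleftrightarrow>
                    (\<exists>G \<in> EXs (n - t) r {0..<m} (suspension m F) 1.
                       \<exists>\<sigma>. bij_betw \<sigma> {0..<n} {0..<n} \<and>
                           H = (\<lambda>e. \<sigma> ` e) ` join_clique r n t G))"
proof -
  let ?p = "turan_density (r - 1) {0..<m - 1} F"
  have m1: "1 \<le> m" using assms(1,2) by simp
  have Fs: "Fset (r - 1) (m - 1) F" by unfold_locales (use assms in auto)
  have p0: "?p \<ge> 0" using Fset.aseq_conv(2)[OF Fs] .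
  have pm: "real m * ?p < 1"
  proof -
    have "real m * ?p < real m * (1 / real m)" using assms(4) m1 by (intro mult_strict_left_mono) auto
    then show ?thesis using m1 by simp
  qed
  have dle: "1 - real m * ?p \<le> 1" using p0 m1 by simp
  show ?thesis
  proof (cases "F = {}")
    case True
    have susp: "suspension m F = {}" unfolding suspension_def True by simp
    show ?thesis
    proof (intro exI[of _ "2 * m + 2"] allI impI)
      fix n t H assume n: "n \<ge> 2 * m + 2"
        and tb: "real t \<le> min ((1 - real m * ?p) / (5 * real m ^ 2)
                            * (real (exs n r {0..<m} (suspension m F) 1) / real ((n - 1) choose (r - 1))))
                         ((1 - real m * ?p) / (40 * real m ^ 2) * (real (n - 1) / real (r - 1)))"
      have tb2: "real t \<le> (1 - real m * ?p) / (40 * real m ^ 2) * (real (n - 1) / real (r - 1))"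
        using tb by simp
      have T: "real t * real (r - 1) * 40 * real m ^ 2 \<le> (1 - real m * ?p) * real (n - 1)"
        by (rule t_bound[OF tb2 m1 assms(1)])
      have "real t * 40 * real m \<le> real t * real (r - 1) * 40 * real m ^ 2"
      proof -
        have one: "1 \<le> real (r - 1) * real m" using assms(1) m1 mult_mono[of 1 "real (r - 1)" 1 "real m"] by simp
        have "real t * 40 * real m * 1 \<le> real t * 40 * real m * (real (r - 1) * real m)"
          by (rule mult_left_mono[OF one]) simp
        then show ?thesis by (simp add: power2_eq_square algebra_simps)
      qed
      also have "\<dots> \<le> real (n - 1)" using T dle mult_right_mono[of "1 - real m * ?p" 1 "real (n - 1)"] by simp
      finally have "real (40 * (t * m)) \<le> real (n - 1)" by (simp add: algebra_simps)
      then have tm: "40 * (t * m) \<le> n - 1" by linarith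
      have ttm: "t \<le> t * m" using m1 by simp
      have c1: "Suc t * m \<le> n" using tm n by simp
      have c2: "m \<le> n - t" using tm ttm n by linarith
      have lhs: "H \<notin> EXs n r {0..<m} (suspension m F) (t + 1)" for H
        unfolding EXs_def has_disj_copies_hasd susp using many_copies[OF c1] by simp
      have rhs: "G \<notin> EXs (n - t) r {0..<m} (suspension m F) 1" for G
        unfolding EXs_def has_disj_copies_hasd susp using all_have_copy_empty[OF c2] by simp
      show "H \<in> EXs n r {0..<m} (suspension m F) (t + 1) \<longleftrightarrow>
                    (\<exists>G \<in> EXs (n - t) r {0..<m} (suspension m F) 1.
                       \<exists>\<sigma>. bij_betw \<sigma> {0..<n} {0..<n} \<and>
                           H = (\<lambda>e. \<sigma> ` e) ` join_clique r n t G)"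
        using lhs rhs by blast
    qed
  next
    case False
    have S: "Setup m r F" by unfold_locales (use assms False in auto)
    have eps: "(1 - real m * ?p) / (20 * real m) > 0" using pm m1 by simp
    obtain N1 where N1: "\<forall>V L. finite V \<longrightarrow> card V \<ge> N1 \<longrightarrow> kgraph_on (r - 1) V L \<longrightarrow> \<not> hasd 1 {0..<m - 1} F V L
            \<longrightarrow> real (card L) < (?p + (1 - real m * ?p) / (20 * real m)) * real (card V choose (r - 1))"
      using Fset.turan_eps[OF Fs eps False] by blast
    interpret M: Main m r F ?p N1 "2 * N1 + 2 * m + 2"
      by (rule Main.intro[OF S], unfold_locales) (use p0 pm N1 in auto)
    show ?thesis
    proof (intro exI[of _ "2 * (2 * N1 + 2 * m + 2)"] allI impI)
      fix n t H assume n: "n \<ge> 2 * (2 * N1 + 2 * m + 2)"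
        and tb: "real t \<le> min ((1 - real m * ?p) / (5 * real m ^ 2)
                            * (real (exs n r {0..<m} (suspension m F) 1) / real ((n - 1) choose (r - 1))))
                         ((1 - real m * ?p) / (40 * real m ^ 2) * (real (n - 1) / real (r - 1)))"
      have tb2: "real t \<le> (1 - real m * ?p) / (40 * real m ^ 2) * (real (n - 1) / real (r - 1))"
        using tb by simp
      have T: "real t * real (r - 1) * 40 * real m ^ 2 \<le> M.\<delta> * real (n - 1)"
        unfolding M.\<delta>_def by (rule t_bound[OF tb2 m1 assms(1)])
      show "H \<in> EXs n r {0..<m} (suspension m F) (t + 1) \<longleftrightarrow>
                    (\<exists>G \<in> EXs (n - t) r {0..<m} (suspension m F) 1.
                       \<exists>\<sigma>. bij_betw \<sigma> {0..<n} {0..<n} \<and>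
                           H = (\<lambda>e. \<sigma> ` e) ` join_clique r n t G)"
        by (rule M.final_main[OF n T])
    qed
  qed
qed


end
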